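(* In $\mathrm{STSym}$, for every generalized Stirling permutation $u$ of positive degree, $$\Delta_+(M_u)=\sum_{i\in\mathrm{GD}(u)}M_{{}^iu}\otimes M_{u^i}.$$
   Context: A generalized Stirling permutation (GSP) of degree $n$ is a planar tree (children of each node linearly ordered, each node a leaf or with $\ge2$ children) with $n+1$ leaves, together with a bijection $\kappa$ from its internal nodes to $\{1,\dots,N\}$ increasing from each internal node to its internal children. Its word $\mathbf w(u)=u_1\cdots u_n$: a leaf has empty word; a node $x$ with children $c_1,\dots,c_k$ has word $\mathbf w(c_1)\kappa(x)\mathbf w(c_2)\cdots\kappa(x)\mathbf w(c_k)$; $u$ is identified with its word (a packed word). For a word $a$, $\mathrm{pack}(a)$ is the packed word with the same relative order of letters. For $0\le i\le n$ with $\{u_1,\dots,u_i\}\cap\{u_{i+1},\dots,u_n\}=\emptyset$ put ${}^iu=\mathrm{pack}(u_1\cdots u_i)$ and $u^i=\mathrm{pack}(u_{i+1}\cdots u_n)$ (these are GSPs; they are the standardized pieces of the allowable lightning splitting of $u$ at leaf $i+1$). $\mathrm{STSym}$ has basis $\{F_u\}$ over GSPs and coproduct $\Delta(F_u)=\sum F_{{}^iu}\otimes F_{u^i}$ over those $i$; $\Delta_+(x)=\Delta(x)-x\otimes 1-1\otimes x$, $1=F_\emptyset$. Planar weak order: for packed words, $w^{-1}(a)=\{p:w_p=a\}$, $\mathrm{iInv}(w)=\{(a,b):a<b,\ \min w^{-1}(a)>\max w^{-1}(b)\}$, $T_a(w)$ = $w$ with letters $a,a+1$ swapped; $\le_{Pw}$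 is the reflexive–transitive closure of: $u$ is covered by $w$ iff $u=T_a(w)$ and $|\mathrm{iInv}(w)|=|\mathrm{iInv}(u)|+1$, restricted to GSPs. The monomial basis is defined by $F_u=\sum_{v\ge_{Pw}u}M_v$. $\mathrm{GD}(u)=\{i\in\{1,\dots,n-1\}: u_a>u_b\text{ for all }a\le i<b\}$. *)

theory Defs
  imports Main
begin

text \<open>Planar trees whose internal nodes carry a natural-number label (the value of kappa).\<close>
datatype ltree = Lf | Nd nat "ltree list"

fun root_label :: "ltree \<Rightarrow> nat option" where
  "root_label Lf = None"
| "root_label (Nd k cs) = Some k"

fun labels :: "ltree \<Rightarrow> nat list" where
  "labels Lf = []"
| "labels (Nd k cs) = k # concat (map labels cs)"

fun wf_tree :: "ltree \<Rightarrow> bool" where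
  "wf_tree Lf = True"
| "wf_tree (Nd k cs) = (2 \<le> length cs \<and>
      list_all (\<lambda>c. wf_tree c \<and> (\<forall>k'. root_label c = Some k' \<longrightarrow> k < k')) cs)"

definition labelled_tree :: "ltree \<Rightarrow> bool" where
  "labelled_tree t \<longleftrightarrow> wf_tree t \<and> distinct (labels t) \<and> set (labels t) = {1..length (labels t)}"

fun joinw :: "nat \<Rightarrow> nat list list \<Rightarrow> nat list" where
  "joinw k [] = []"
| "joinw k [x] = x"
| "joinw k (x # xs) = x @ [k] @ joinw k xs"

fun tword :: "ltree \<Rightarrow> nat list" where
  "tword Lf = []"
| "tword (Nd k cs) = joinw k (map tword cs)"

definition GSP :: "nat list \<Rightarrow> bool" where
  "GSP u \<longleftrightarrow> (\<exists>t. labelled_tree t \<and> tword t = u)"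

definition pack :: "nat list \<Rightarrow> nat list" where
  "pack a = map (\<lambda>x. card {y \<in> set a. y < x} + 1) a"

definition positions :: "nat list \<Rightarrow> nat \<Rightarrow> nat set" where
  "positions w a = {p. p < length w \<and> w ! p = a}"

definition iInv :: "nat list \<Rightarrow> (nat \<times> nat) set" where
  "iInv w = {(a, b). a \<in> set w \<and> b \<in> set w \<and> a < b \<and>
                    Min (positions w a) > Max (positions w b)}"

definition swapT :: "nat \<Rightarrow> nat list \<Rightarrow> nat list" where
  "swapT a w = map (\<lambda>x. if x = a then a + 1 else if x = a + 1 then a else x) w"

definition pw_cover :: "nat list \<Rightarrow> nat list \<Rightarrow> bool" where
  "pw_cover u w \<longleftrightarrow> GSP u \<and> GSP w \<and> (\<exists>a. u = swapT a w) \<and>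
                     card (iInv w) = card (iInv u) + 1"

definition pw_le :: "nat list \<Rightarrow> nat list \<Rightarrow> bool" where
  "pw_le = pw_cover\<^sup>*\<^sup>*"

text \<open>Global descents, with 1-based positions as in the paper.\<close>
definition GD :: "nat list \<Rightarrow> nat set" where
  "GD u = {i \<in> {1..<length u}. \<forall>a b. 1 \<le> a \<and> a \<le> i \<and> i < b \<and> b \<le> length u
                                  \<longrightarrow> u ! (a - 1) > u ! (b - 1)}"

text \<open>Elements of STSym are represented by their coefficient functions in the F-basis
  (indexed by words; only GSPs carry nonzero coefficients); elements of
  STSym \<otimes> STSym by coefficient functions on pairs (F_p \<otimes> F_q).\<close>

type_synonym 'a elt = "nat list \<Rightarrow> 'a"
type_synonym 'a elt2 = "nat list \<times> nat list \<Rightarrow> 'a"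

definition Fb :: "nat list \<Rightarrow> 'a::comm_ring_1 elt" where
  "Fb u = (\<lambda>v. if v = u then 1 else 0)"

definition tens :: "'a::comm_ring_1 elt \<Rightarrow> 'a elt \<Rightarrow> 'a elt2" where
  "tens x y = (\<lambda>(p, q). x p * y q)"

definition Mb :: "nat list \<Rightarrow> 'a::comm_ring_1 elt" where
  "Mb = (THE M. (\<forall>u. \<not> GSP u \<longrightarrow> M u = (\<lambda>_. 0)) \<and>
                (\<forall>u. GSP u \<longrightarrow> Fb u = (\<lambda>x. \<Sum>v\<in>{v. GSP v \<and> pw_le u v}. M v x)))"

definition splits :: "nat list \<Rightarrow> nat set" where
  "splits u = {i. i \<le> length u \<and> set (take i u) \<inter> set (drop i u) = {}}"

definition DeltaF :: "nat list \<Rightarrow> 'a::comm_ring_1 elt2" where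
  "DeltaF u = (\<lambda>(p, q). \<Sum>i\<in>splits u.
       if p = pack (take i u) \<and> q = pack (drop i u) then 1 else 0)"

definition Delta :: "'a::comm_ring_1 elt \<Rightarrow> 'a elt2" where
  "Delta x = (\<lambda>pq. \<Sum>u\<in>{u. GSP u \<and> x u \<noteq> 0}. x u * DeltaF u pq)"

definition Delta_plus :: "'a::comm_ring_1 elt \<Rightarrow> 'a elt2" where
  "Delta_plus x = (\<lambda>pq. Delta x pq - tens x (Fb []) pq - tens (Fb []) x pq)"

end

theory Submission
  imports Defs "HOL-Library.Function_Algebras"
begin


fun stir :: "nat list \<Rightarrow> bool" where
  "stir [] = True"
| "stir (x # xs) = (stir xs \<and> (x \<in> set xs \<longrightarrow> (\<forall>y\<in>set (takeWhile (\<lambda>z. z \<noteq> x) xs). x \<le> y)))"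

lemma stir_appR: "stir (xs @ ys) \<Longrightarrow> stir ys"
  by (induction xs) auto

lemma stir_appL: "stir (xs @ ys) \<Longrightarrow> stir xs"
proof (induction xs)
  case (Cons x xs)
  then show ?case by (auto simp: takeWhile_append1)
qed auto

lemma stir_app_disj: "set xs \<inter> set ys = {} \<Longrightarrow> stir (xs @ ys) = (stir xs \<and> stir ys)"
proof (induction xs)
  case (Cons x xs)
  then show ?case by (auto simp: takeWhile_append1)
qed auto

lemma stir_mid: "stir (xs @ [m] @ ys) \<Longrightarrow> y \<in> set xs \<Longrightarrow> y \<in> set ys \<Longrightarrow> m \<notin> set xs \<Longrightarrow> y \<le> m"
proof (induction xs)
  case (Cons x xs)
  show ?case
  proof (cases "y = x")
    case True
    show ?thesis
    proof (cases "x \<in> set xs")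
      case True
      then show ?thesis using Cons \<open>y = x\<close> by auto
    next
      case False
      have "x \<noteq> m" using Cons by auto
      have "takeWhile (\<lambda>z. z \<noteq> x) (xs @ [m] @ ys) = xs @ [m] @ takeWhile (\<lambda>z. z \<noteq> x) ys"
        using False \<open>x \<noteq> m\<close> by (induction xs) auto
      then show ?thesis using Cons \<open>y = x\<close> by auto
    qed
  next
    case False
    then show ?thesis using Cons by auto
  qed
qed auto

lemma takeWhile_map_inj: "inj_on f (insert x (set xs)) \<Longrightarrow>
   takeWhile (\<lambda>z. z \<noteq> f x) (map f xs) = map f (takeWhile (\<lambda>z. z \<noteq> x) xs)"
  by (induction xs) (auto simp: inj_on_def)

lemma stir_map_mono:
  assumes "\<And>a b. a \<in> set xs \<Longrightarrow> b \<in> set xs \<Longrightarrow> a < b \<Longrightarrow> f a < f b"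
  shows "stir (map f xs) = stir xs"
  using assms
proof (induction xs)
  case (Cons x xs)
  have inj: "inj_on f (insert x (set xs))"
    using Cons.prems by (simp add: inj_on_def) (metis linorder_neqE_nat less_irrefl)
  have mono: "\<And>a b. a \<in> set (x#xs) \<Longrightarrow> b \<in> set (x#xs) \<Longrightarrow> (f a \<le> f b) = (a \<le> b)"
    using Cons.prems by (metis leD le_less_linear less_imp_le_nat nat_less_le)
  have IH: "stir (map f xs) = stir xs" using Cons by auto
  have mem: "(f x \<in> f ` set xs) = (x \<in> set xs)" using inj by (auto simp: inj_on_def)
  have sub: "set (takeWhile (\<lambda>z. z \<noteq> x) xs) \<subseteq> set xs" by (meson set_takeWhileD subsetI)
  show ?case using IH mem sub mono
    by (auto simp: takeWhile_map_inj[OF inj])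
qed auto


fun disjs :: "nat set list \<Rightarrow> bool" where
  "disjs [] = True"
| "disjs (A # As) = (A \<inter> \<Union>(set As) = {} \<and> disjs As)"

lemma joinw_props:
  assumes "\<forall>w\<in>set ws. stir w \<and> (\<forall>x\<in>set w. k < x)" "disjs (map set ws)"
  shows "stir (joinw k ws) \<and> set (joinw k ws) = \<Union>(set ` set ws) \<union> (if 2 \<le> length ws then {k} else {})"
  using assms
proof (induction k ws rule: joinw.induct)
  case (3 k x y zs)
  let ?r = "joinw k (y # zs)"
  have IH: "stir ?r \<and> set ?r = \<Union>(set ` set (y#zs)) \<union> (if 2 \<le> length (y#zs) then {k} else {})"
    using 3 by auto
  have sx: "stir x" "\<forall>a\<in>set x. k < a" using "3.prems" by auto
  have d1: "set x \<inter> set (k # ?r) = {}" using IH "3.prems" sx(2) by (auto split: if_splits)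
  have kr: "\<forall>a\<in>set ?r. k \<le> a" using IH "3.prems" by (auto split: if_splits simp: less_imp_le)
  have "stir (k # ?r)" using IH kr by (auto dest: set_takeWhileD)
  then have "stir (x @ (k # ?r))" using stir_app_disj[OF d1] sx by auto
  then show ?case using IH by auto
qed auto

lemma disjs_labels: "distinct (concat (map labels cs)) \<Longrightarrow> disjs (map (set \<circ> labels) cs)"
  by (induction cs) auto

lemma root_in_labels: "root_label t = Some r \<Longrightarrow> r \<in> set (labels t)"
  by (cases t) auto

lemma T1: "wf_tree t \<Longrightarrow> distinct (labels t) \<Longrightarrow>
  stir (tword t) \<and> set (tword t) = set (labels t) \<and> (\<forall>r. root_label t = Some r \<longrightarrow> (\<forall>x\<in>set (labels t). r \<le> x))"
proof (induction t)
  case Lf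
  then show ?case by simp
next
  case (Nd k cs)
  have ch: "\<forall>c\<in>set cs. wf_tree c \<and> (\<forall>k'. root_label c = Some k' \<longrightarrow> k < k')"
    using Nd.prems by (simp add: list_all_iff)
  have dc: "\<forall>c\<in>set cs. distinct (labels c)" using Nd.prems by (auto simp: distinct_concat_iff)
  have IH: "\<forall>c\<in>set cs. stir (tword c) \<and> set (tword c) = set (labels c) \<and> (\<forall>r. root_label c = Some r \<longrightarrow> (\<forall>x\<in>set (labels c). r \<le> x))"
    using Nd.IH ch dc by blast
  have gt: "\<forall>c\<in>set cs. \<forall>x\<in>set (labels c). k < x"
  proof (intro ballI)
    fix c x assume c: "c \<in> set cs" and x: "x \<in> set (labels c)"
    obtain r cs' where "c = Nd r cs'" using x by (cases c) auto
    then show "k < x" using ch IH c x by (metis order_less_le_trans root_label.simps(2))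
  qed
  have "disjs (map (set \<circ> labels) cs)" using Nd.prems disjs_labels by auto
  moreover have "map (set \<circ> labels) cs = map set (map tword cs)" using IH by auto
  ultimately have dj: "disjs (map set (map tword cs))" by simp
  have J: "stir (joinw k (map tword cs)) \<and> set (joinw k (map tword cs)) = \<Union>(set ` set (map tword cs)) \<union> (if 2 \<le> length (map tword cs) then {k} else {})"
    by (rule joinw_props) (use IH gt dj in auto)
  have len: "2 \<le> length cs" using Nd.prems by simp
  show ?case using J len IH gt by (auto simp: less_imp_le)
qed


lemma joinw_cons: "ys \<noteq> [] \<Longrightarrow> joinw m (x # ys) = x @ [m] @ joinw m ys"
  by (cases ys) auto

lemma stir_split: "stir (xs @ m # ys) \<Longrightarrow> stir xs \<and> stir ys"
  using stir_appL stir_appR[of "xs @ [m]" ys] by simp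

lemma C_lemma:
  assumes out: "\<And>v. length v < N \<Longrightarrow> stir v \<Longrightarrow> \<exists>t. wf_tree t \<and> distinct (labels t) \<and> set (labels t) = set v \<and> tword t = v"
  shows "length w < N \<Longrightarrow> stir w \<Longrightarrow> \<forall>y\<in>set w. m \<le> y \<Longrightarrow>
    \<exists>ts. ts \<noteq> [] \<and> joinw m (map tword ts) = w \<and>
      (\<forall>t\<in>set ts. wf_tree t \<and> (\<forall>k'. root_label t = Some k' \<longrightarrow> m < k')) \<and>
      distinct (concat (map labels ts)) \<and> set (concat (map labels ts)) = set w - {m}"
proof (induction "length w" arbitrary: w rule: less_induct)
  case less
  show ?case
  proof (cases "m \<in> set w")
    case False
    obtain t where t: "wf_tree t" "distinct (labels t)" "set (labels t) = set w" "tword t = w"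
      using out less.prems by blast
    have "\<forall>k'. root_label t = Some k' \<longrightarrow> m < k'"
      using root_in_labels t(3) less.prems(3) False by (metis le_neq_implies_less)
    then show ?thesis using t False by (intro exI[of _ "[t]"]) auto
  next
    case True
    obtain s0 r where w: "w = s0 @ m # r" and ms0: "m \<notin> set s0" using split_list_first[OF True] by blast
    have st: "stir s0 \<and> stir r" using stir_split[of s0 m r] less.prems(2) w by simp
    have l0: "length s0 < N" "length r < N" "length r < length w" using less.prems(1) w by auto
    obtain t0 where t0: "wf_tree t0" "distinct (labels t0)" "set (labels t0) = set s0" "tword t0 = s0"
      using out l0 st by blast
    have mr: "\<forall>y\<in>set r. m \<le> y" using less.prems(3) w by simp
    obtain ts where ts: "ts \<noteq> []" "joinw m (map tword ts) = r"
      "\<forall>t\<in>set ts. wf_tree t \<and> (\<forall>k'. root_label t = Some k' \<longrightarrow> m < k')"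
      "distinct (concat (map labels ts))" "set (concat (map labels ts)) = set r - {m}"
      using less.hyps[OF l0(3) l0(2)] st mr by blast
    have r0: "\<forall>k'. root_label t0 = Some k' \<longrightarrow> m < k'"
      using root_in_labels t0(3) less.prems(3) ms0 w by (metis Un_iff le_neq_implies_less set_append)
    have dis: "set s0 \<inter> (set r - {m}) = {}"
    proof -
      { fix y assume "y \<in> set s0" "y \<in> set r" "y \<noteq> m"
        then have "y \<le> m" using stir_mid[of s0 m r y] less.prems(2) w ms0 by simp
        moreover have "m \<le> y" using less.prems(3) w \<open>y \<in> set s0\<close> by simp
        ultimately have False using \<open>y \<noteq> m\<close> by auto }
      then show ?thesis by blast
    qed
    have "map tword (t0 # ts) \<noteq> [] \<and> joinw m (map tword (t0 # ts)) = w"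
      using joinw_cons[of "map tword ts" m "tword t0"] ts(1,2) t0(4) w by simp
    then show ?thesis using ts t0 r0 dis ms0 w
      by (intro exI[of _ "t0 # ts"]) auto
  qed
qed

lemma T2: "stir w \<Longrightarrow> \<exists>t. wf_tree t \<and> distinct (labels t) \<and> set (labels t) = set w \<and> tword t = w"
proof (induction "length w" arbitrary: w rule: less_induct)
  case less
  show ?case
  proof (cases "w = []")
    case True
    then show ?thesis by (intro exI[of _ Lf]) auto
  next
    case False
    define m where "m = Min (set w)"
    have mw: "m \<in> set w" using False m_def by simp
    have mle: "\<forall>y\<in>set w. m \<le> y" using m_def by simp
    obtain s0 r where w: "w = s0 @ m # r" and ms0: "m \<notin> set s0" using split_list_first[OF mw] by blast
    have st: "stir s0 \<and> stir r" using stir_split[of s0 m r] less.prems w by simp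
    have l0: "length s0 < length w" "length r < length w" using w by auto
    have mr: "\<forall>y\<in>set r. m \<le> y" using mle w by simp
    obtain t0 where t0: "wf_tree t0" "distinct (labels t0)" "set (labels t0) = set s0" "tword t0 = s0"
      using less.hyps[OF l0(1)] st by blast
    obtain ts where ts: "ts \<noteq> []" "joinw m (map tword ts) = r"
      "\<forall>t\<in>set ts. wf_tree t \<and> (\<forall>k'. root_label t = Some k' \<longrightarrow> m < k')"
      "distinct (concat (map labels ts))" "set (concat (map labels ts)) = set r - {m}"
      using C_lemma[of "length w" r m, OF less.hyps l0(2)] st mr by blast
    have r0: "\<forall>k'. root_label t0 = Some k' \<longrightarrow> m < k'"
      using root_in_labels t0(3) mle ms0 w by (metis Un_iff le_neq_implies_less set_append)
    have dis: "set s0 \<inter> (set r - {m}) = {}"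
    proof -
      { fix y assume "y \<in> set s0" "y \<in> set r" "y \<noteq> m"
        then have "y \<le> m" using stir_mid[of s0 m r y] less.prems w ms0 by simp
        moreover have "m \<le> y" using mle w \<open>y \<in> set s0\<close> by simp
        ultimately have False using \<open>y \<noteq> m\<close> by auto }
      then show ?thesis by blast
    qed
    have tw: "tword (Nd m (t0 # ts)) = w"
      using joinw_cons[of "map tword ts" m "tword t0"] ts(1,2) t0(4) w by simp
    have len: "2 \<le> length (t0 # ts)" using ts(1) by (cases ts) auto
    have wf: "wf_tree (Nd m (t0 # ts))" using len ts(3) t0(1) r0 by (auto simp: list_all_iff)
    show ?thesis using tw wf ts t0 dis ms0 w
      by (intro exI[of _ "Nd m (t0 # ts)"]) auto
  qed
qed

definition packed :: "nat list \<Rightarrow> bool" where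
  "packed u \<longleftrightarrow> set u = {1..card (set u)}"

lemma GSP_iff: "GSP u \<longleftrightarrow> stir u \<and> packed u"
proof
  assume "GSP u"
  then obtain t where t: "labelled_tree t" "tword t = u" by (auto simp: GSP_def)
  then have "stir u \<and> set u = set (labels t)" using T1 by (auto simp: labelled_tree_def)
  moreover have "card (set (labels t)) = length (labels t)" using t by (simp add: labelled_tree_def distinct_card)
  ultimately show "stir u \<and> packed u" using t by (auto simp: labelled_tree_def packed_def)
next
  assume a: "stir u \<and> packed u"
  then obtain t where t: "wf_tree t" "distinct (labels t)" "set (labels t) = set u" "tword t = u" using T2 by blast
  have "card (set (labels t)) = length (labels t)" using t(2) by (rule distinct_card)
  then have "labelled_tree t" using t a by (auto simp: labelled_tree_def packed_def)
  then show "GSP u" using t by (auto simp: GSP_def)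
qed


definition rk :: "nat set \<Rightarrow> nat \<Rightarrow> nat" where
  "rk A x = card {y \<in> A. y < x} + 1"

lemma pack_rk: "pack a = map (rk (set a)) a"
  by (simp add: pack_def rk_def)

lemma rk_mono: "finite A \<Longrightarrow> x \<in> A \<Longrightarrow> x < y \<Longrightarrow> rk A x < rk A y"
  unfolding rk_def
  by (rule add_less_mono1, rule psubset_card_mono) auto

lemma rk_le: "finite A \<Longrightarrow> x \<in> A \<Longrightarrow> rk A x \<le> card A"
  unfolding rk_def
proof -
  assume "finite A" "x \<in> A"
  then have "{y \<in> A. y < x} \<subset> A" by auto
  then have "card {y \<in> A. y < x} < card A" using \<open>finite A\<close> by (simp add: psubset_card_mono)
  then show "card {y \<in> A. y < x} + 1 \<le> card A" by simp
qed

lemma rk_inj: "finite A \<Longrightarrow> inj_on (rk A) A"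
  by (rule inj_onI) (metis linorder_neqE_nat rk_mono less_irrefl)

lemma rk_image: "finite A \<Longrightarrow> rk A ` A = {1..card A}"
proof -
  assume f: "finite A"
  have sub: "rk A ` A \<subseteq> {1..card A}" using rk_le[OF f] by (auto simp: rk_def)
  have "card (rk A ` A) = card A" using card_image[OF rk_inj[OF f]] .
  then show ?thesis using sub by (intro card_subset_eq) auto
qed

lemma set_pack: "set (pack a) = {1..card (set a)}"
  by (simp add: pack_rk rk_image)

lemma card_set_pack: "card (set (pack a)) = card (set a)"
  by (simp add: set_pack)

lemma packed_pack: "packed (pack a)"
  by (simp add: packed_def set_pack)

lemma length_pack[simp]: "length (pack a) = length a"
  by (simp add: pack_def)

lemma stir_pack: "stir (pack a) = stir a"
  unfolding pack_rk by (rule stir_map_mono) (simp add: rk_mono)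

lemma GSP_pack: "GSP (pack a) = stir a"
  by (simp add: GSP_iff stir_pack packed_pack)

lemma rk_image_mono:
  assumes "\<And>x y. x \<in> A \<Longrightarrow> y \<in> A \<Longrightarrow> x < y \<Longrightarrow> f x < f y" "finite A" "x \<in> A"
  shows "rk (f ` A) (f x) = rk A x"
proof -
  have inj: "inj_on f A" using assms(1) by (rule_tac inj_onI) (metis linorder_neqE_nat less_irrefl)
  have "{z \<in> f ` A. z < f x} = f ` {z \<in> A. z < x}"
  proof (intro equalityI subsetI)
    fix z assume "z \<in> {z \<in> f ` A. z < f x}"
    then obtain y where y: "y \<in> A" "z = f y" "f y < f x" by auto
    have "y < x" proof (rule ccontr)
      assume "\<not> y < x"
      then have "x = y \<or> x < y" by auto
      then show False using y assms(1)[of x y] assms(3) by auto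
    qed
    then show "z \<in> f ` {z \<in> A. z < x}" using y by auto
  next
    fix z assume "z \<in> f ` {z \<in> A. z < x}"
    then show "z \<in> {z \<in> f ` A. z < f x}" using assms by auto
  qed
  moreover have "card (f ` {z \<in> A. z < x}) = card {z \<in> A. z < x}"
    using inj by (intro card_image) (auto intro: inj_on_subset)
  ultimately show ?thesis by (simp add: rk_def)
qed

lemma pack_map_mono:
  assumes "\<And>x y. x \<in> set a \<Longrightarrow> y \<in> set a \<Longrightarrow> x < y \<Longrightarrow> f x < f y"
  shows "pack (map f a) = pack a"
proof -
  have "\<forall>x\<in>set a. rk (f ` set a) (f x) = rk (set a) x"
    using rk_image_mono[of "set a" f, OF assms] by simp
  then show ?thesis unfolding pack_rk by simp
qed

lemma packed_pack_id: "packed a \<Longrightarrow> pack a = a"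
proof -
  assume p: "packed a"
  define c where "c = card (set a)"
  have sa: "set a = {1..c}" using p by (simp add: packed_def c_def)
  have "\<forall>x\<in>set a. rk (set a) x = x"
  proof
    fix x assume x: "x \<in> set a"
    then have x1: "1 \<le> x" "x \<le> c" using sa by auto
    have "{y \<in> {1..c}. y < x} = {1..<x}" using x1 by auto
    then show "rk (set a) x = x" using x1 sa by (simp add: rk_def)
  qed
  then show ?thesis by (simp add: pack_rk map_idI)
qed

lemma GSP_packed: "GSP u \<Longrightarrow> packed u" by (simp add: GSP_iff)
lemma GSP_stir: "GSP u \<Longrightarrow> stir u" by (simp add: GSP_iff)
lemma GSP_pack_id: "GSP u \<Longrightarrow> pack u = u" by (simp add: GSP_iff packed_pack_id)

lemma nth_pack: "i < length a \<Longrightarrow> pack a ! i = rk (set a) (a ! i)"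
  by (simp add: pack_rk)

lemma pack_nth_eq: "i < length a \<Longrightarrow> j < length a \<Longrightarrow> (pack a ! i = pack a ! j) = (a ! i = a ! j)"
  using rk_inj[of "set a"] by (auto simp: nth_pack inj_on_def)

lemma GSP_set: "GSP u \<Longrightarrow> set u = {1..card (set u)}" by (simp add: GSP_iff packed_def)

lemma GSP_Nil: "GSP []" by (simp add: GSP_iff packed_def)

lemma pack_Nil[simp]: "pack [] = []" by (simp add: pack_def)


definition sw :: "nat \<Rightarrow> nat \<Rightarrow> nat" where
  "sw a x = (if x = a then a + 1 else if x = a + 1 then a else x)"

lemma swapT_sw: "swapT a w = map (sw a) w"
  by (simp add: swapT_def sw_def)

lemma sw_sw[simp]: "sw a (sw a x) = x" by (simp add: sw_def)

lemma sw_inj: "inj (sw a)" by (metis injI sw_sw)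

lemma sw_eq_iff: "(sw a x = y) = (x = sw a y)" by (metis sw_sw)

definition bef :: "nat list \<Rightarrow> nat \<Rightarrow> nat \<Rightarrow> bool" where
  "bef w b a \<longleftrightarrow> (\<forall>p q. p < length w \<longrightarrow> q < length w \<longrightarrow> w ! p = b \<longrightarrow> w ! q = a \<longrightarrow> p < q)"

lemma positions_fin: "finite (positions w a)" by (simp add: positions_def)
lemma positions_ne: "a \<in> set w \<Longrightarrow> positions w a \<noteq> {}"
  by (auto simp: positions_def in_set_conv_nth)

lemma iInv_iff: "(x, y) \<in> iInv w \<longleftrightarrow> x \<in> set w \<and> y \<in> set w \<and> x < y \<and> bef w y x"
proof -
  have "x \<in> set w \<Longrightarrow> y \<in> set w \<Longrightarrow> (Max (positions w y) < Min (positions w x)) = bef w y x"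
    by (simp add: Max_less_iff Min_gr_iff positions_fin positions_ne) (auto simp: bef_def positions_def)
  then show ?thesis by (auto simp: iInv_def)
qed

lemma iInv_sub: "iInv w \<subseteq> set w \<times> set w" by (auto simp: iInv_iff)
lemma iInv_fin: "finite (iInv w)" by (rule finite_subset[OF iInv_sub]) auto

lemma sw_mono_pair: "c < d \<Longrightarrow> (c, d) \<noteq> (a, a + 1) \<Longrightarrow> sw a c < sw a d"
  by (auto simp: sw_def)

lemma bef_swap: "bef (map (sw a) w) d c = bef w (sw a d) (sw a c)"
  by (auto simp: bef_def sw_eq_iff)

lemma iInv_swap: "(c, d) \<in> iInv (map (sw a) w) \<longleftrightarrow> c < d \<and> sw a c \<in> set w \<and> sw a d \<in> set w \<and> bef w (sw a d) (sw a c)"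
proof -
  have "\<And>z. (z \<in> set (map (sw a) w)) = (sw a z \<in> set w)" by (simp add: image_iff) (metis sw_sw)
  then show ?thesis by (auto simp: iInv_iff bef_swap)
qed

definition gp :: "nat \<Rightarrow> nat \<times> nat \<Rightarrow> nat \<times> nat" where
  "gp a pq = (sw a (fst pq), sw a (snd pq))"

lemma gp_gp: "gp a (gp a pq) = pq" by (simp add: gp_def)
lemma gp_inj: "inj (gp a)" by (metis injI gp_gp)

lemma iInv_swap_diff: "iInv (map (sw a) w) - {(a, a+1)} = gp a ` (iInv w - {(a, a+1)})"
proof (intro equalityI subsetI)
  fix pq assume pq: "pq \<in> iInv (map (sw a) w) - {(a, a+1)}"
  obtain c d where cd: "pq = (c, d)" by (cases pq)
  have h: "c < d" "sw a c \<in> set w" "sw a d \<in> set w" "bef w (sw a d) (sw a c)" "(c, d) \<noteq> (a, a+1)"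
    using pq cd iInv_swap by auto
  have "sw a c < sw a d" using sw_mono_pair h by auto
  moreover have "(sw a c, sw a d) \<noteq> (a, a+1)" using h(1) by (auto simp: sw_eq_iff sw_def)
  ultimately have "gp a pq \<in> iInv w - {(a, a+1)}" using h cd by (simp add: gp_def iInv_iff)
  then show "pq \<in> gp a ` (iInv w - {(a, a+1)})" by (metis gp_gp image_eqI)
next
  fix pq assume "pq \<in> gp a ` (iInv w - {(a, a+1)})"
  then obtain xy where xy0: "xy \<in> iInv w - {(a, a+1)}" "pq = gp a xy" by blast
  obtain x y where "xy = (x, y)" by (cases xy)
  then have xy: "(x, y) \<in> iInv w" "(x, y) \<noteq> (a, a+1)" "pq = (sw a x, sw a y)"
    using xy0 by (auto simp: gp_def)
  have h: "x < y" "x \<in> set w" "y \<in> set w" "bef w y x" using xy iInv_iff by auto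
  have "sw a x < sw a y" using sw_mono_pair h xy by auto
  moreover have "(sw a x, sw a y) \<noteq> (a, a+1)" using h(1) by (auto simp: sw_eq_iff sw_def)
  ultimately show "pq \<in> iInv (map (sw a) w) - {(a, a+1)}" using h xy by (simp add: iInv_swap)
qed

lemma card_split: "finite A \<Longrightarrow> card A = card (A - {p}) + (if p \<in> A then 1 else 0)"
proof (cases "p \<in> A")
  case True
  assume "finite A"
  then show ?thesis using True card_Suc_Diff1[of A p] by simp
next
  case False
  then show ?thesis by simp
qed

lemma excl: "(a, a+1) \<in> iInv (map (sw a) w) \<Longrightarrow> (a, a+1) \<notin> iInv w"
proof
  assume h1: "(a, a+1) \<in> iInv (map (sw a) w)" and h2: "(a, a+1) \<in> iInv w"
  have b1: "bef w a (a+1)" using h1 by (simp add: iInv_swap sw_def)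
  have "a \<in> set w" "a+1 \<in> set w" and b2: "bef w (a+1) a" using h2 by (auto simp: iInv_iff)
  then obtain p q where pq: "p < length w" "q < length w" "w ! p = a" "w ! q = a + 1"
    by (auto simp: in_set_conv_nth)
  have "p < q" using b1 pq unfolding bef_def by blast
  moreover have "q < p" using b2 pq unfolding bef_def by blast
  ultimately show False by simp
qed

lemma card_iInv_swap:
  "card (iInv w) = card (iInv w - {(a,a+1)}) + (if (a,a+1) \<in> iInv w then 1 else 0)"
  "card (iInv (map (sw a) w)) = card (iInv w - {(a,a+1)}) + (if (a,a+1) \<in> iInv (map (sw a) w) then 1 else 0)"
proof -
  show "card (iInv w) = card (iInv w - {(a,a+1)}) + (if (a,a+1) \<in> iInv w then 1 else 0)"
    by (rule card_split[OF iInv_fin])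
  have "card (iInv (map (sw a) w) - {(a,a+1)}) = card (iInv w - {(a,a+1)})"
    unfolding iInv_swap_diff by (rule card_image) (rule inj_on_subset[OF gp_inj], simp)
  then show "card (iInv (map (sw a) w)) = card (iInv w - {(a,a+1)}) + (if (a,a+1) \<in> iInv (map (sw a) w) then 1 else 0)"
    using card_split[OF iInv_fin, of "map (sw a) w" "(a,a+1)"] by simp
qed

lemma cover_iff: "pw_cover u w \<longleftrightarrow> GSP u \<and> GSP w \<and> (\<exists>a. u = map (sw a) w \<and> (a, a+1) \<in> iInv w)"
proof
  assume "pw_cover u w"
  then obtain a where h: "GSP u" "GSP w" "u = map (sw a) w" "card (iInv w) = card (iInv u) + 1"
    by (auto simp: pw_cover_def swapT_sw)
  then have "(a, a+1) \<in> iInv w" using card_iInv_swap[where w=w and a=a] excl[where w=w and a=a] by (auto split: if_splits)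
  then show "GSP u \<and> GSP w \<and> (\<exists>a. u = map (sw a) w \<and> (a, a+1) \<in> iInv w)" using h by blast
next
  assume "GSP u \<and> GSP w \<and> (\<exists>a. u = map (sw a) w \<and> (a, a+1) \<in> iInv w)"
  then obtain a where h: "GSP u" "GSP w" "u = map (sw a) w" "(a, a+1) \<in> iInv w" by blast
  have "(a, a+1) \<notin> iInv u" using excl h by blast
  then have "card (iInv w) = card (iInv u) + 1" using card_iInv_swap[where w=w and a=a] h by simp
  then show "pw_cover u w" using h by (auto simp: pw_cover_def swapT_sw)
qed


definition eqp :: "nat list \<Rightarrow> nat list \<Rightarrow> bool" where
  "eqp u v \<longleftrightarrow> length u = length v \<and> (\<forall>i<length u. \<forall>j<length u. (u!i = u!j) = (v!i = v!j))"

lemma eqp_refl: "eqp u u" by (simp add: eqp_def)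
lemma eqp_trans: "eqp u v \<Longrightarrow> eqp v w \<Longrightarrow> eqp u w" by (simp add: eqp_def)
lemma eqp_sw: "eqp (map (sw a) w) w" by (auto simp: eqp_def sw_eq_iff)

lemma cover_props: "pw_cover u w \<Longrightarrow> GSP u \<and> GSP w \<and> eqp u w \<and> card (iInv u) < card (iInv w)"
proof -
  assume "pw_cover u w"
  then obtain a where h: "GSP u" "GSP w" "u = swapT a w" "card (iInv w) = card (iInv u) + 1"
    unfolding pw_cover_def by blast
  have "eqp u w" using h(3) eqp_sw[of a w] by (simp add: swapT_sw)
  then show ?thesis using h by simp
qed

lemma pw_le_props: "pw_le u v \<Longrightarrow> GSP u \<Longrightarrow> GSP v \<and> eqp u v \<and> (u = v \<or> card (iInv u) < card (iInv v))"
  unfolding pw_le_def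
proof (induction rule: rtranclp_induct)
  case base
  then show ?case by (simp add: eqp_refl)
next
  case (step y z)
  have c: "GSP z" "eqp y z" "card (iInv y) < card (iInv z)" using cover_props[OF step.hyps(2)] by auto
  have i: "GSP y" "eqp u y" "u = y \<or> card (iInv u) < card (iInv y)" using step.IH step.prems by auto
  have "eqp u z" using eqp_trans[OF i(2) c(2)] .
  moreover have "u = z \<or> card (iInv u) < card (iInv z)" using i(3) c(3) by auto
  ultimately show ?case using c(1) by blast
qed

lemma pw_le_refl: "pw_le u u" by (simp add: pw_le_def)
lemma pw_le_trans: "pw_le u v \<Longrightarrow> pw_le v w \<Longrightarrow> pw_le u w" by (simp add: pw_le_def)
lemma pw_le_cover: "pw_cover u v \<Longrightarrow> pw_le u v" by (simp add: pw_le_def)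

lemma eqp_length: "eqp u v \<Longrightarrow> length u = length v" by (simp add: eqp_def)

lemma bef_take: "bef w b a \<Longrightarrow> bef (take i w) b a" unfolding bef_def by simp
lemma bef_drop: "bef w b a \<Longrightarrow> bef (drop i w) b a"
  unfolding bef_def
proof (intro allI impI)
  fix p q assume h: "\<forall>p q. p < length w \<longrightarrow> q < length w \<longrightarrow> w ! p = b \<longrightarrow> w ! q = a \<longrightarrow> p < q"
    and p: "p < length (drop i w)" and q: "q < length (drop i w)" and pb: "drop i w ! p = b" and qa: "drop i w ! q = a"
  have "i + p < i + q" using h[rule_format, of "i+p" "i+q"] p q pb qa by simp
  then show "p < q" by simp
qed

lemma rk_suc:
  assumes "finite A" "a \<in> A" "a + 1 \<in> A"
  shows "rk A (a + 1) = rk A a + 1"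
proof -
  have "{y \<in> A. y < a + 1} = insert a {y \<in> A. y < a}" using assms by auto
  moreover have "finite {y \<in> A. y < a}" using assms by simp
  ultimately show ?thesis by (simp add: rk_def)
qed

lemma proj_step:
  assumes st: "stir x" "stir (map (sw a) x)"
      and bf: "a \<in> set x \<Longrightarrow> a + 1 \<in> set x \<Longrightarrow> bef x (a+1) a"
  shows "pw_le (pack (map (sw a) x)) (pack x)"
proof (cases "a \<in> set x \<and> a + 1 \<in> set x")
  case False
  have "pack (map (sw a) x) = pack x"
  proof (rule pack_map_mono)
    fix c d assume "c \<in> set x" "d \<in> set x" "c < d"
    then have "(c, d) \<noteq> (a, a+1)" using False by auto
    then show "sw a c < sw a d" using \<open>c < d\<close> by (rule sw_mono_pair[rotated])
  qed
  then show ?thesis by (simp add: pw_le_refl)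
next
  case True
  define A where "A = set x"
  define a' where "a' = rk A a"
  have fA: "finite A" by (simp add: A_def)
  have inA: "a \<in> A" "a + 1 \<in> A" using True A_def by auto
  have r1: "rk A (a+1) = a' + 1" using rk_suc[OF fA inA] a'_def by simp
  have setm: "set (map (sw a) x) = A"
  proof -
    have "sw a ` A = A"
    proof (intro equalityI subsetI)
      fix z assume "z \<in> sw a ` A" then show "z \<in> A" using inA by (auto simp: sw_def)
    next
      fix z assume z: "z \<in> A"
      have "sw a z \<in> A" using z inA by (auto simp: sw_def)
      then show "z \<in> sw a ` A" by (metis sw_sw image_eqI)
    qed
    then show ?thesis by (simp add: A_def)
  qed
  have inj: "inj_on (rk A) A" by (rule rk_inj[OF fA])
  have elt: "\<And>z. z \<in> A \<Longrightarrow> rk A (sw a z) = sw a' (rk A z)"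
  proof -
    fix z assume z: "z \<in> A"
    show "rk A (sw a z) = sw a' (rk A z)"
    proof (cases "z = a \<or> z = a + 1")
      case True
      then show ?thesis using r1 a'_def by (auto simp: sw_def)
    next
      case False
      have "rk A z \<noteq> rk A a" "rk A z \<noteq> rk A (a+1)"
        using False inj z inA by (simp_all add: inj_on_eq_iff)
      then have "rk A z \<noteq> a'" "rk A z \<noteq> a' + 1" using a'_def r1 by simp_all
      then show ?thesis using False by (simp add: sw_def)
    qed
  qed
  have e1: "pack (map (sw a) x) = map (sw a') (pack x)"
  proof -
    have "pack (map (sw a) x) = map (rk A) (map (sw a) x)" unfolding pack_rk setm ..
    also have "\<dots> = map (\<lambda>z. sw a' (rk A z)) x"
      using elt by (simp add: A_def)
    also have "\<dots> = map (sw a') (pack x)" by (simp add: pack_rk A_def)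
    finally show ?thesis .
  qed
  have inv: "(a', a'+1) \<in> iInv (pack x)"
  proof -
    have "rk A a \<in> set (pack x)" "rk A (a+1) \<in> set (pack x)" using inA by (simp_all add: pack_rk A_def)
    then have m1: "a' \<in> set (pack x)" "a' + 1 \<in> set (pack x)" using r1 a'_def by simp_all
    have "bef x (a+1) a" using bf True by simp
    then have "bef (pack x) (a'+1) a'"
      unfolding bef_def
    proof (intro allI impI)
      fix p q assume h: "\<forall>p q. p < length x \<longrightarrow> q < length x \<longrightarrow> x ! p = a + 1 \<longrightarrow> x ! q = a \<longrightarrow> p < q"
        and p: "p < length (pack x)" and q: "q < length (pack x)" and pb: "pack x ! p = a' + 1" and qa: "pack x ! q = a'"
      have "rk A (x ! p) = rk A (a+1)" using pb p r1 by (simp add: nth_pack A_def)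
      then have xp: "x ! p = a + 1" using inj inA p by (simp add: inj_on_eq_iff A_def)
      have "rk A (x ! q) = rk A a" using qa q a'_def by (simp add: nth_pack A_def)
      then have xq: "x ! q = a" using inj inA q by (simp add: inj_on_eq_iff A_def)
      show "p < q" using h p q xp xq by simp
    qed
    then show ?thesis using m1 by (simp add: iInv_iff)
  qed
  have "GSP (pack (map (sw a) x))" "GSP (pack x)" using st by (simp_all add: GSP_pack)
  then have "pw_cover (pack (map (sw a) x)) (pack x)" using e1 inv cover_iff by blast
  then show ?thesis by (rule pw_le_cover)
qed

lemma proj_take: assumes "pw_le u v" "GSP u" shows "pw_le (pack (take i u)) (pack (take i v))"
proof -
  have "pw_cover\<^sup>*\<^sup>* u v" using assms(1) by (simp add: pw_le_def)
  then show ?thesis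
proof (induction rule: rtranclp_induct)
  case base
  then show ?case by (simp add: pw_le_refl)
next
  case (step y z)
  obtain a where a: "y = map (sw a) z" "(a, a+1) \<in> iInv z" "GSP y" "GSP z"
    using step.hyps(2) cover_iff by blast
  have "stir (take i z)" "stir (map (sw a) (take i z))"
    using a GSP_stir stir_appL[of "take i _" "drop i _"] by (metis append_take_drop_id take_map)+
  moreover have "bef (take i z) (a+1) a" using a(2) by (simp add: iInv_iff bef_take)
  ultimately have "pw_le (pack (map (sw a) (take i z))) (pack (take i z))"
    using proj_step by blast
  then show ?case using step a pw_le_trans by (metis take_map)
qed
qed

lemma proj_drop: assumes "pw_le u v" "GSP u" shows "pw_le (pack (drop i u)) (pack (drop i v))"
proof -
  have "pw_cover\<^sup>*\<^sup>* u v" using assms(1) by (simp add: pw_le_def)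
  then show ?thesis
proof (induction rule: rtranclp_induct)
  case base
  then show ?case by (simp add: pw_le_refl)
next
  case (step y z)
  obtain a where a: "y = map (sw a) z" "(a, a+1) \<in> iInv z" "GSP y" "GSP z"
    using step.hyps(2) cover_iff by blast
  have "stir (drop i z)" "stir (map (sw a) (drop i z))"
    using a GSP_stir stir_appR[of "take i _" "drop i _"] by (metis append_take_drop_id drop_map)+
  moreover have "bef (drop i z) (a+1) a" using a(2) by (simp add: iInv_iff bef_drop)
  ultimately have "pw_le (pack (map (sw a) (drop i z))) (pack (drop i z))"
    using proj_step by blast
  then show ?case using step a pw_le_trans by (metis drop_map)
qed
qed


definition shift :: "nat \<Rightarrow> nat list \<Rightarrow> nat list" where
  "shift k a = map (\<lambda>x. x + k) a"

definition gd :: "nat \<Rightarrow> nat list \<Rightarrow> bool" where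
  "gd i v \<longleftrightarrow> (\<forall>x\<in>set (take i v). \<forall>y\<in>set (drop i v). y < x)"

lemma set_shift: "set (shift k a) = (\<lambda>x. x + k) ` set a" by (simp add: shift_def)
lemma length_shift[simp]: "length (shift k a) = length a" by (simp add: shift_def)

lemma GSP_concat:
  assumes a: "GSP a" and b: "GSP b" and k: "k = card (set b)"
  shows "GSP (shift k a @ b)"
proof -
  have sa: "set a = {1..card (set a)}" using GSP_set[OF a] .
  have sb: "set b = {1..k}" using GSP_set[OF b] k by simp
  have ss: "set (shift k a) = {1+k..card (set a) + k}" unfolding set_shift by (subst sa) simp
  have dis: "set (shift k a) \<inter> set b = {}" using ss sb by auto
  have st: "stir (shift k a)" unfolding shift_def by (subst stir_map_mono) (auto simp: GSP_stir[OF a])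
  have "stir (shift k a @ b)" using stir_app_disj[OF dis] st GSP_stir[OF b] by simp
  moreover have "set (shift k a @ b) = {1..card (set a) + k}" using ss sb by auto
  ultimately show ?thesis by (simp add: GSP_iff packed_def)
qed

lemma pw_le_card: assumes "pw_le b b'" shows "card (set b') = card (set b)"
proof -
  have "pw_cover\<^sup>*\<^sup>* b b'" using assms by (simp add: pw_le_def)
  then show ?thesis
  proof (induction rule: rtranclp_induct)
    case (step y z)
    obtain c where "y = map (sw c) z" using step.hyps(2) cover_iff by blast
    then have "card (set y) = card (set z)" by (simp add: card_image inj_on_subset[OF sw_inj])
    then show ?case using step.IH by simp
  qed simp
qed

lemma downset:
  assumes f: "finite R" and pos: "\<forall>y\<in>R. 1 \<le> y" and dc: "\<forall>y\<in>R. \<forall>z. 1 \<le> z \<longrightarrow> z \<le> y \<longrightarrow> z \<in> R"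
  shows "R = {1..card R}"
proof (cases "R = {}")
  case True then show ?thesis by simp
next
  case False
  have "R = {1..Max R}"
  proof (intro equalityI subsetI)
    fix y assume "y \<in> R" then show "y \<in> {1..Max R}" using pos f by auto
  next
    fix z assume "z \<in> {1..Max R}" then show "z \<in> R" using dc Max_in[OF f False] by auto
  qed
  then show ?thesis by (metis card_atLeastAtMost diff_Suc_1)
qed

lemma set_take_drop: "set v = set (take i v) \<union> set (drop i v)"
  by (metis append_take_drop_id set_append)

lemma REC:
  assumes g: "GSP v" and gdv: "gd i v"
  shows "v = shift (card (set (drop i v))) (pack (take i v)) @ pack (drop i v)"
proof -
  define L where "L = set (take i v)"
  define R where "R = set (drop i v)"
  define m where "m = card (set v)"
  define k where "k = card R"
  have sv: "set v = {1..m}" using GSP_set[OF g] m_def by simp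
  have LR: "L \<union> R = {1..m}" using sv set_take_drop[of v i] L_def R_def by simp
  have lt: "\<forall>x\<in>L. \<forall>y\<in>R. y < x" using gdv by (simp add: gd_def L_def R_def)
  have Rd: "R = {1..k}"
    unfolding k_def
  proof (rule downset)
    show "finite R" by (simp add: R_def)
    show "\<forall>y\<in>R. 1 \<le> y" using LR by auto
    show "\<forall>y\<in>R. \<forall>z. 1 \<le> z \<longrightarrow> z \<le> y \<longrightarrow> z \<in> R"
    proof (intro ballI allI impI)
      fix y z assume y: "y \<in> R" and z: "1 \<le> z" "z \<le> y"
      have "y \<in> {1..m}" using y LR by blast
      then have "z \<in> {1..m}" using z by auto
      moreover have "z \<notin> L" using lt y z by (meson leD)
      ultimately show "z \<in> R" using LR by auto
    qed
  qed
  have km: "k \<le> m" using LR Rd by auto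
  have Ld: "L = {k+1..m}"
  proof (intro equalityI subsetI)
    fix x assume x: "x \<in> L"
    have "x \<notin> R" using lt x by blast
    then show "x \<in> {k+1..m}" using x LR Rd by auto
  next
    fix x assume x: "x \<in> {k+1..m}"
    then show "x \<in> L" using LR Rd by auto
  qed
  have p2: "pack (drop i v) = drop i v"
    by (rule packed_pack_id) (simp add: packed_def R_def[symmetric] Rd)
  have rkL: "\<And>x. x \<in> L \<Longrightarrow> rk L x = x - k"
  proof -
    fix x assume x: "x \<in> L"
    have "{y \<in> L. y < x} = {k+1..<x}" using x Ld by auto
    moreover have "k + 1 \<le> x" using x Ld by auto
    ultimately show "rk L x = x - k" by (simp add: rk_def Suc_diff_Suc)
  qed
  have p1: "shift k (pack (take i v)) = take i v"
  proof -
    have h: "\<And>x. x \<in> L \<Longrightarrow> rk L x + k = x"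
    proof -
      fix x assume x: "x \<in> L"
      have "k + 1 \<le> x" using x Ld by simp
      then show "rk L x + k = x" using rkL[OF x] by simp
    qed
    have "\<forall>x\<in>set (take i v). rk L x + k = x" using h unfolding L_def by blast
    then have "map (\<lambda>x. rk L x + k) (take i v) = take i v" by (simp add: map_idI)
    then show ?thesis unfolding pack_rk shift_def L_def[symmetric] by (simp add: comp_def)
  qed
  show ?thesis using p1 p2 k_def R_def by simp
qed


lemma ADJ:
  fixes L R :: "nat set"
  assumes "L \<inter> R = {}" "L \<union> R = {1..m}" "x \<in> L" "y \<in> R" "x < y"
  shows "\<exists>x'\<in>L. x' + 1 \<in> R"
  using assms(3-5)
proof (induction "y - x" arbitrary: x rule: less_induct)
  case less
  show ?case
  proof (cases "x + 1 \<in> R")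
    case True then show ?thesis using less.prems by blast
  next
    case False
    have "y \<in> {1..m}" using less.prems assms(2) by blast
    then have "x + 1 \<in> {1..m}" using less.prems by auto
    then have xL: "x + 1 \<in> L" using False assms(2) by blast
    have "x + 1 \<noteq> y" using False less.prems by blast
    then have "x + 1 < y" using less.prems by simp
    then show ?thesis using less.hyps[of "x+1"] xL less.prems by simp
  qed
qed

lemma sw_image: "a \<in> A \<Longrightarrow> a + 1 \<in> A \<Longrightarrow> sw a ` A = A"
proof (intro equalityI subsetI)
  fix z assume "a \<in> A" "a + 1 \<in> A" "z \<in> sw a ` A" then show "z \<in> A" by (auto simp: sw_def)
next
  fix z assume h: "a \<in> A" "a + 1 \<in> A" "z \<in> A"
  have "sw a z \<in> A" using h by (auto simp: sw_def)
  then show "z \<in> sw a ` A" by (metis sw_sw image_eqI)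
qed

lemma in_take_nth: "p < i \<Longrightarrow> p < length u \<Longrightarrow> u ! p \<in> set (take i u)"
  by (metis in_set_conv_nth length_take min_less_iff_conj nth_take)

lemma in_drop_nth: "i \<le> p \<Longrightarrow> p < length u \<Longrightarrow> u ! p \<in> set (drop i u)"
proof -
  assume "i \<le> p" "p < length u"
  then have "drop i u ! (p - i) = u ! p" "p - i < length (drop i u)" by simp_all
  then show ?thesis by (metis nth_mem)
qed

lemma bubble:
  assumes "GSP u" "set (take i u) \<inter> set (drop i u) = {}"
  shows "pw_le u (shift (card (set (drop i u))) (pack (take i u)) @ pack (drop i u))"
  using assms
proof (induction "\<Sum>{1..card (set u)} - \<Sum>(set (take i u))" arbitrary: u rule: less_induct)
  case less
  define L where "L = set (take i u)"
  define R where "R = set (drop i u)"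
  define m where "m = card (set u)"
  have sv: "set u = {1..m}" using GSP_set[OF less.prems(1)] m_def by simp
  have LR: "L \<union> R = {1..m}" using sv set_take_drop[of u i] L_def R_def by simp
  have dis: "L \<inter> R = {}" using less.prems L_def R_def by simp
  show ?case
  proof (cases "gd i u")
    case True
    then show ?thesis using REC[OF less.prems(1) True] pw_le_refl by metis
  next
    case False
    then obtain x0 y0 where xy0: "x0 \<in> L" "y0 \<in> R" "\<not> y0 < x0" unfolding gd_def L_def R_def by blast
    have "x0 \<noteq> y0" using xy0 dis by blast
    then have "x0 < y0" using xy0 by simp
    then obtain x where x: "x \<in> L" "x + 1 \<in> R" using ADJ[OF dis LR xy0(1,2)] by blast
    have xnR: "x \<notin> R" and x1nL: "x + 1 \<notin> L" using x dis by blast+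
    define w where "w = map (sw x) u"
    have tw: "take i w = map (sw x) (take i u)" and dw: "drop i w = map (sw x) (drop i u)"
      by (simp_all add: w_def take_map drop_map)
    have monoL: "\<And>c d. c \<in> L \<Longrightarrow> d \<in> L \<Longrightarrow> c < d \<Longrightarrow> sw x c < sw x d"
    proof -
      fix c d assume "c \<in> L" "d \<in> L" "c < d"
      then have "(c, d) \<noteq> (x, x+1)" using x1nL by auto
      then show "sw x c < sw x d" using \<open>c < d\<close> by (rule sw_mono_pair[rotated])
    qed
    have monoR: "\<And>c d. c \<in> R \<Longrightarrow> d \<in> R \<Longrightarrow> c < d \<Longrightarrow> sw x c < sw x d"
    proof -
      fix c d assume "c \<in> R" "d \<in> R" "c < d"
      then have "(c, d) \<noteq> (x, x+1)" using xnR by auto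
      then show "sw x c < sw x d" using \<open>c < d\<close> by (rule sw_mono_pair[rotated])
    qed
    have setTw: "set (take i w) = sw x ` L" and setDw: "set (drop i w) = sw x ` R"
      using tw dw L_def R_def by simp_all
    have disw: "set (take i w) \<inter> set (drop i w) = {}"
      unfolding setTw setDw using dis sw_inj by (simp add: image_Int[symmetric])
    have st1: "stir (take i w)" unfolding tw
      by (subst stir_map_mono) (use monoL L_def less.prems(1) GSP_stir stir_appL[of "take i u" "drop i u"] in auto)
    have st2: "stir (drop i w)" unfolding dw
      by (subst stir_map_mono) (use monoR R_def less.prems(1) GSP_stir stir_appR[of "take i u" "drop i u"] in auto)
    have stw: "stir w" using stir_app_disj[OF disw] st1 st2 by simp
    have xs: "x \<in> set u" "x + 1 \<in> set u" using x L_def R_def set_take_drop[of u i] by auto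
    have setw: "set w = set u" using sw_image[OF xs] w_def by simp
    have Gw: "GSP w" using stw setw less.prems(1) by (simp add: GSP_iff packed_def)
    have uw: "u = map (sw x) w" by (simp add: w_def comp_def)
    have bf: "bef w (x+1) x"
      unfolding bef_def
    proof (intro allI impI)
      fix p q assume p: "p < length w" and q: "q < length w" and wp: "w ! p = x + 1" and wq: "w ! q = x"
      have "sw x (u ! p) = x + 1" using p wp by (simp add: w_def)
      then have "u ! p = sw x (x + 1)" by (metis sw_sw)
      then have up: "u ! p = x" by (simp add: sw_def)
      have "sw x (u ! q) = x" using q wq by (simp add: w_def)
      then have "u ! q = sw x x" by (metis sw_sw)
      then have uq: "u ! q = x + 1" by (simp add: sw_def)
      have "p < i" proof (rule ccontr)
        assume "\<not> p < i"
        then have "u ! p \<in> R" using in_drop_nth[of i p u] p R_def w_def by simp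
        then show False using up xnR by simp
      qed
      moreover have "i \<le> q" proof (rule ccontr)
        assume "\<not> i \<le> q"
        then have "u ! q \<in> L" using in_take_nth[of q i u] q L_def w_def by simp
        then show False using uq x1nL by simp
      qed
      ultimately show "p < q" by simp
    qed
    have inv: "(x, x+1) \<in> iInv w" using bf xs setw by (simp add: iInv_iff)
    have cov: "pw_le u w" using cover_iff[of u w] less.prems(1) Gw uw inv pw_le_cover by blast
    have e1: "pack (take i w) = pack (take i u)" unfolding tw by (rule pack_map_mono) (use monoL L_def in auto)
    have e2: "pack (drop i w) = pack (drop i u)" unfolding dw by (rule pack_map_mono) (use monoR R_def in auto)
    have e3: "card (set (drop i w)) = card (set (drop i u))"
      unfolding setDw R_def by (rule card_image) (rule inj_on_subset[OF sw_inj], simp)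
    have swL: "sw x ` L = insert (x+1) (L - {x})"
    proof (intro equalityI subsetI)
      fix z assume "z \<in> sw x ` L" then show "z \<in> insert (x+1) (L - {x})" using x1nL by (auto simp: sw_def)
    next
      fix z assume z: "z \<in> insert (x+1) (L - {x})"
      then have "sw x z \<in> L" using x x1nL by (auto simp: sw_def)
      then show "z \<in> sw x ` L" by (metis sw_sw image_eqI)
    qed
    have fL: "finite L" by (simp add: L_def)
    have sum1: "\<Sum>(sw x ` L) = \<Sum>L + 1"
    proof -
      have "\<Sum>(sw x ` L) = (x + 1) + \<Sum>(L - {x})" unfolding swL using fL x1nL by simp
      moreover have "\<Sum>L = x + \<Sum>(L - {x})" using fL x(1) by (simp add: sum.remove)
      ultimately show ?thesis by simp
    qed
    have bound: "\<Sum>(sw x ` L) \<le> \<Sum>{1..m}"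
    proof (rule sum_mono2)
      show "sw x ` L \<subseteq> {1..m}" using setTw setw sv set_take_drop[of w i] by blast
    qed simp_all
    have meas: "\<Sum>{1..card (set w)} - \<Sum>(set (take i w)) < \<Sum>{1..card (set u)} - \<Sum>(set (take i u))"
      using sum1 bound setw setTw L_def m_def by simp
    have "pw_le w (shift (card (set (drop i w))) (pack (take i w)) @ pack (drop i w))"
      using less.hyps[OF meas Gw disw] .
    then show ?thesis using cov e1 e2 e3 pw_le_trans by metis
  qed
qed


lemma nth_shift_app: "p < length z + length b \<Longrightarrow>
  (shift k z @ b) ! p = (if p < length z then z ! p + k else b ! (p - length z))"
  by (simp add: nth_append shift_def)

lemma GSP_mem: assumes "GSP u" "x \<in> set u" shows "1 \<le> x \<and> x \<le> card (set u)"
proof -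
  define n where "n = card (set u)"
  have "set u = {1..n}" using GSP_set[OF assms(1)] n_def by simp
  then have "x \<in> {1..n}" using assms(2) by simp
  then show ?thesis unfolding n_def[symmetric] by simp
qed

lemma liftL:
  assumes "pw_le a a'" "GSP a" "GSP b"
  shows "pw_le (shift (card (set b)) a @ b) (shift (card (set b)) a' @ b)"
proof -
  define k where "k = card (set b)"
  have sb: "set b = {1..k}" using GSP_set[OF assms(3)] k_def by simp
  have "pw_cover\<^sup>*\<^sup>* a a'" using assms(1) by (simp add: pw_le_def)
  then have "pw_le (shift k a @ b) (shift k a' @ b)"
  proof (induction rule: rtranclp_induct)
    case base then show ?case by (simp add: pw_le_refl)
  next
    case (step y z)
    obtain c where c: "y = map (sw c) z" "(c, c+1) \<in> iInv z" "GSP y" "GSP z"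
      using step.hyps(2) cover_iff by blast
    have cz: "c \<in> set z" "c + 1 \<in> set z" and bz: "bef z (c+1) c" using c(2) by (auto simp: iInv_iff)
    have c1: "1 \<le> c" using cz GSP_mem[OF c(4)] by blast
    have e1: "shift k y = map (sw (c+k)) (shift k z)" by (simp add: c(1) shift_def sw_def)
    have e2: "map (sw (c+k)) b = b"
    proof (rule map_idI)
      fix v assume "v \<in> set b" then have "v \<le> k" using sb by auto
      then show "sw (c+k) v = v" using c1 by (simp add: sw_def)
    qed
    have eq: "shift k y @ b = map (sw (c+k)) (shift k z @ b)" using e1 e2 by simp
    have inS: "c + k \<in> set (shift k z @ b)" "c + k + 1 \<in> set (shift k z @ b)"
      using cz by (auto simp: shift_def)
    have bf: "bef (shift k z @ b) (c+k+1) (c+k)"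
      unfolding bef_def
    proof (intro allI impI)
      fix p q assume p: "p < length (shift k z @ b)" and q: "q < length (shift k z @ b)"
        and vp: "(shift k z @ b) ! p = c + k + 1" and vq: "(shift k z @ b) ! q = c + k"
      have pz: "p < length z"
      proof (rule ccontr)
        assume "\<not> p < length z"
        then have "b ! (p - length z) = c + k + 1" "p - length z < length b" using vp p by (simp_all add: nth_shift_app)
        then have "c + k + 1 \<in> set b" by (metis nth_mem)
        then show False using sb by auto
      qed
      have qz: "q < length z"
      proof (rule ccontr)
        assume "\<not> q < length z"
        then have "b ! (q - length z) = c + k" "q - length z < length b" using vq q by (simp_all add: nth_shift_app)
        then have "c + k \<in> set b" by (metis nth_mem)
        then show False using sb c1 by auto
      qed
      have "z ! p = c + 1" "z ! q = c" using vp vq pz qz p q by (simp_all add: nth_shift_app)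
      then show "p < q" using bz pz qz by (simp add: bef_def)
    qed
    have inv: "(c+k, c+k+1) \<in> iInv (shift k z @ b)" using inS bf by (simp add: iInv_iff)
    have G: "GSP (shift k y @ b)" "GSP (shift k z @ b)"
      using GSP_concat[OF c(3) assms(3)] GSP_concat[OF c(4) assms(3)] k_def by simp_all
    have "pw_cover (shift k y @ b) (shift k z @ b)" using cover_iff G eq inv by blast
    then show ?case using step.IH pw_le_trans pw_le_cover by blast
  qed
  then show ?thesis using k_def by simp
qed

lemma liftR:
  assumes "pw_le b b'" "GSP b" "GSP a"
  shows "pw_le (shift (card (set b)) a @ b) (shift (card (set b)) a @ b')"
proof -
  define k where "k = card (set b)"
  have "pw_cover\<^sup>*\<^sup>* b b'" using assms(1) by (simp add: pw_le_def)
  then have "pw_le (shift k a @ b) (shift k a @ b')"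
  proof (induction rule: rtranclp_induct)
    case base then show ?case by (simp add: pw_le_refl)
  next
    case (step y z)
    obtain c where c: "y = map (sw c) z" "(c, c+1) \<in> iInv z" "GSP y" "GSP z"
      using step.hyps(2) cover_iff by blast
    have "pw_cover\<^sup>*\<^sup>* b z" using step.hyps(1,2) by (rule rtranclp.rtrancl_into_rtrancl)
    then have "pw_le b z" by (simp add: pw_le_def)
    then have kz: "card (set z) = k" using pw_le_card k_def by simp
    have sz: "set z = {1..k}" using GSP_set[OF c(4)] kz by metis
    have cz: "c \<in> set z" "c + 1 \<in> set z" and bz: "bef z (c+1) c" using c(2) by (auto simp: iInv_iff)
    have ck: "c + 1 \<le> k" using cz sz by auto
    have e2: "map (sw c) (shift k a) = shift k a"
    proof (rule map_idI)
      fix v assume "v \<in> set (shift k a)"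
      then obtain x where x: "x \<in> set a" "v = x + k" by (auto simp: shift_def)
      have "1 \<le> x" using x GSP_mem[OF assms(3)] by blast
      then have "k < v" using x by simp
      then show "sw c v = v" using ck by (simp add: sw_def)
    qed
    have eq: "shift k a @ y = map (sw c) (shift k a @ z)" using e2 c(1) by simp
    have inS: "c \<in> set (shift k a @ z)" "c + 1 \<in> set (shift k a @ z)" using cz by auto
    have big: "\<And>p. p < length a \<Longrightarrow> k < (shift k a @ z) ! p"
    proof -
      fix p assume p: "p < length a"
      then have "a ! p \<in> set a" by simp
      then have "1 \<le> a ! p" using GSP_mem[OF assms(3)] by blast
      then show "k < (shift k a @ z) ! p" using p by (simp add: nth_append shift_def)
    qed
    have bf: "bef (shift k a @ z) (c+1) c"
      unfolding bef_def
    proof (intro allI impI)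
      fix p q assume p: "p < length (shift k a @ z)" and q: "q < length (shift k a @ z)"
        and vp: "(shift k a @ z) ! p = c + 1" and vq: "(shift k a @ z) ! q = c"
      have pa: "length a \<le> p"
      proof (rule ccontr)
        assume "\<not> length a \<le> p" then have "k < c + 1" using big[of p] vp by simp
        then show False using ck by simp
      qed
      have qa: "length a \<le> q"
      proof (rule ccontr)
        assume "\<not> length a \<le> q" then have "k < c" using big[of q] vq by simp
        then show False using ck by simp
      qed
      have "z ! (p - length a) = c + 1" "z ! (q - length a) = c" using vp vq pa qa by (simp_all add: nth_append)
      moreover have "p - length a < length z" "q - length a < length z" using p q pa qa by auto
      ultimately have "p - length a < q - length a" using bz by (simp add: bef_def)
      then show "p < q" using pa qa by simp
    qed
    have inv: "(c, c+1) \<in> iInv (shift k a @ z)" using inS bf by (simp add: iInv_iff)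
    have ky: "card (set y) = k" using kz c(1) by (simp add: card_image inj_on_subset[OF sw_inj])
    have G: "GSP (shift k a @ y)" "GSP (shift k a @ z)"
      using GSP_concat[OF assms(3) c(3)] GSP_concat[OF assms(3) c(4)] kz ky by simp_all
    have "pw_cover (shift k a @ y) (shift k a @ z)" using cover_iff G eq inv by blast
    then show ?case using step.IH pw_le_trans pw_le_cover by blast
  qed
  then show ?thesis using k_def by simp
qed


definition up :: "nat list \<Rightarrow> nat list set" where
  "up u = {v. GSP v \<and> pw_le u v}"

definition GD0 :: "nat list \<Rightarrow> nat set" where
  "GD0 v = {j. j \<le> length v \<and> gd j v}"

lemma disj_nth: "(set (take j u) \<inter> set (drop j u) = {}) =
   (\<forall>p q. p < j \<longrightarrow> j \<le> q \<longrightarrow> q < length u \<longrightarrow> u ! p \<noteq> u ! q)"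
proof
  assume h: "set (take j u) \<inter> set (drop j u) = {}"
  show "\<forall>p q. p < j \<longrightarrow> j \<le> q \<longrightarrow> q < length u \<longrightarrow> u ! p \<noteq> u ! q"
  proof (intro allI impI)
    fix p q assume pq: "p < j" "j \<le> q" "q < length u"
    then have "p < length u" by simp
    then have "u ! p \<in> set (take j u)" "u ! q \<in> set (drop j u)"
      using in_take_nth[of p j u] in_drop_nth[of j q u] pq by simp_all
    then show "u ! p \<noteq> u ! q" using h by auto
  qed
next
  assume h: "\<forall>p q. p < j \<longrightarrow> j \<le> q \<longrightarrow> q < length u \<longrightarrow> u ! p \<noteq> u ! q"
  show "set (take j u) \<inter> set (drop j u) = {}"
  proof (rule ccontr)
    assume "set (take j u) \<inter> set (drop j u) \<noteq> {}"
    then obtain x where x: "x \<in> set (take j u)" "x \<in> set (drop j u)" by blast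
    from x(1) obtain p where p: "p < length (take j u)" "take j u ! p = x" by (auto simp: in_set_conv_nth)
    from x(2) obtain q where q: "q < length (drop j u)" "drop j u ! q = x" by (auto simp: in_set_conv_nth)
    have "u ! p = x" "p < j" using p by auto
    moreover have "u ! (j + q) = x" "j + q < length u" using q by auto
    ultimately show False using h[rule_format, of p "j + q"] by simp
  qed
qed

lemma splits_eqp: assumes "eqp u v" shows "j \<in> splits u \<longleftrightarrow> j \<in> splits v"
proof -
  have l: "length u = length v" and e: "\<And>i j. i < length u \<Longrightarrow> j < length u \<Longrightarrow> (u!i = u!j) = (v!i = v!j)"
    using assms by (auto simp: eqp_def)
  have "(\<forall>p q. p < j \<longrightarrow> j \<le> q \<longrightarrow> q < length u \<longrightarrow> u ! p \<noteq> u ! q) =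
        (\<forall>p q. p < j \<longrightarrow> j \<le> q \<longrightarrow> q < length v \<longrightarrow> v ! p \<noteq> v ! q)"
  proof (intro iffI allI impI)
    fix p q assume h: "\<forall>p q. p < j \<longrightarrow> j \<le> q \<longrightarrow> q < length u \<longrightarrow> u ! p \<noteq> u ! q"
      and pq: "p < j" "j \<le> q" "q < length v"
    then have "u ! p \<noteq> u ! q" "p < length u" "q < length u" using l by auto
    then show "v ! p \<noteq> v ! q" using e by blast
  next
    fix p q assume h: "\<forall>p q. p < j \<longrightarrow> j \<le> q \<longrightarrow> q < length v \<longrightarrow> v ! p \<noteq> v ! q"
      and pq: "p < j" "j \<le> q" "q < length u"
    then have "v ! p \<noteq> v ! q" "p < length u" "q < length u" using l by auto
    then show "u ! p \<noteq> u ! q" using e by blast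
  qed
  then show ?thesis unfolding splits_def disj_nth using l by simp
qed

lemma gd_disj: "gd j v \<Longrightarrow> set (take j v) \<inter> set (drop j v) = {}"
  unfolding gd_def by (meson disjoint_iff less_irrefl)

lemma stir_take: "stir v \<Longrightarrow> stir (take i v)"
  using stir_appL[of "take i v" "drop i v"] by simp
lemma stir_drop: "stir v \<Longrightarrow> stir (drop i v)"
  using stir_appR[of "take i v" "drop i v"] by simp

definition phi :: "nat list \<times> nat \<Rightarrow> nat \<times> nat list \<times> nat list" where
  "phi vj = (snd vj, pack (take (snd vj) (fst vj)), pack (drop (snd vj) (fst vj)))"

definition tgt :: "nat list \<Rightarrow> (nat \<times> nat list \<times> nat list) set" where
  "tgt u = {(i, a, b). i \<in> splits u \<and> a \<in> up (pack (take i u)) \<and> b \<in> up (pack (drop i u))}"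

lemma phi_into:
  assumes g: "GSP u" and v: "v \<in> up u" and j: "j \<in> GD0 v"
  shows "phi (v, j) \<in> tgt u"
proof -
  have gv: "GSP v" and le: "pw_le u v" using v by (auto simp: up_def)
  have e: "eqp u v" using pw_le_props[OF le g] by blast
  have "j \<in> splits v" using j gd_disj by (auto simp: GD0_def splits_def)
  then have sj: "j \<in> splits u" using splits_eqp[OF e] by simp
  have "pack (take j v) \<in> up (pack (take j u))"
    using proj_take[OF le g] GSP_pack stir_take GSP_stir[OF gv] by (auto simp: up_def)
  moreover have "pack (drop j v) \<in> up (pack (drop j u))"
    using proj_drop[OF le g] GSP_pack stir_drop GSP_stir[OF gv] by (auto simp: up_def)
  ultimately show ?thesis using sj by (simp add: phi_def tgt_def)
qed

lemma phi_inj: "inj_on phi (Sigma (up u) GD0)"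
proof (rule inj_onI)
  fix x y assume x: "x \<in> Sigma (up u) GD0" and y: "y \<in> Sigma (up u) GD0" and e: "phi x = phi y"
  obtain v j where xv: "x = (v, j)" by (cases x)
  obtain v' j' where yv: "y = (v', j')" by (cases y)
  have jj: "j = j'" using e xv yv by (simp add: phi_def)
  have p1: "pack (take j v) = pack (take j v')" and p2: "pack (drop j v) = pack (drop j v')"
    using e xv yv jj by (simp_all add: phi_def)
  have g: "GSP v" "GSP v'" "gd j v" "gd j v'" using x y xv yv jj by (auto simp: up_def GD0_def)
  have "card (set (drop j v)) = card (set (drop j v'))" using p2 card_set_pack by metis
  then have "v = v'" using REC[OF g(1) g(3)] REC[OF g(2) g(4)] p1 p2 by metis
  then show "x = y" using xv yv jj by simp
qed

lemma phi_onto: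
  assumes g: "GSP u" and t: "(i, a, b) \<in> tgt u"
  shows "\<exists>v. v \<in> up u \<and> i \<in> GD0 v \<and> phi (v, i) = (i, a, b)"
proof -
  have si: "i \<in> splits u" and ua: "a \<in> up (pack (take i u))" and ub: "b \<in> up (pack (drop i u))"
    using t by (auto simp: tgt_def)
  have il: "i \<le> length u" and dis: "set (take i u) \<inter> set (drop i u) = {}" using si by (auto simp: splits_def)
  have ga: "GSP a" "pw_le (pack (take i u)) a" and gb: "GSP b" "pw_le (pack (drop i u)) b"
    using ua ub by (auto simp: up_def)
  have g0: "GSP (pack (take i u))" "GSP (pack (drop i u))"
    using GSP_pack stir_take stir_drop GSP_stir[OF g] by auto
  have la: "length a = i"
    using pw_le_props[OF ga(2) g0(1)] il by (simp add: eqp_def)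
  define k where "k = card (set (drop i u))"
  have kb0: "card (set (pack (drop i u))) = k" using k_def card_set_pack by simp
  have kb: "card (set b) = k" using pw_le_card[OF gb(2)] kb0 by simp
  define v where "v = shift k a @ b"
  have s1: "pw_le u (shift k (pack (take i u)) @ pack (drop i u))" using bubble[OF g dis] k_def by simp
  have s2: "pw_le (shift k (pack (take i u)) @ pack (drop i u)) (shift k a @ pack (drop i u))"
    using liftL[OF ga(2) g0(1) g0(2)] kb0 by simp
  have s3: "pw_le (shift k a @ pack (drop i u)) (shift k a @ b)"
    using liftR[OF gb(2) g0(2) ga(1)] kb0 by simp
  have gv: "GSP v" using GSP_concat[OF ga(1) gb(1)] kb v_def by simp
  have vu: "v \<in> up u" using s1 s2 s3 pw_le_trans gv v_def by (auto simp: up_def)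
  have tk: "take i v = shift k a" and dr: "drop i v = b" using la v_def by simp_all
  have gdv: "gd i v"
    unfolding gd_def tk dr
  proof (intro ballI)
    fix x y assume x: "x \<in> set (shift k a)" and y: "y \<in> set b"
    obtain x0 where x0: "x0 \<in> set a" "x = x0 + k" using x by (auto simp: shift_def)
    have "1 \<le> x0" using GSP_mem[OF ga(1) x0(1)] by blast
    moreover have "y \<le> k" using GSP_mem[OF gb(1) y] kb by simp
    ultimately show "y < x" using x0 by simp
  qed
  have "i \<le> length v" using la v_def by simp
  then have iG: "i \<in> GD0 v" using gdv by (simp add: GD0_def)
  have "pack (take i v) = a" unfolding tk shift_def
    using pack_map_mono[of a "\<lambda>x. x + k"] GSP_pack_id[OF ga(1)] by simp
  moreover have "pack (drop i v) = b" unfolding dr using GSP_pack_id[OF gb(1)] .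
  ultimately show ?thesis using vu iG by (intro exI[of _ v]) (simp add: phi_def)
qed

lemma phi_bij: "GSP u \<Longrightarrow> bij_betw phi (Sigma (up u) GD0) (tgt u)"
proof -
  assume g: "GSP u"
  have "phi ` Sigma (up u) GD0 = tgt u"
  proof (intro equalityI subsetI)
    fix t assume "t \<in> phi ` Sigma (up u) GD0"
    then show "t \<in> tgt u" using phi_into[OF g] by auto
  next
    fix t assume t: "t \<in> tgt u"
    obtain i a b where "t = (i, a, b)" by (cases t)
    then obtain v where "v \<in> up u" "i \<in> GD0 v" "phi (v, i) = t" using phi_onto[OF g] t by blast
    then show "t \<in> phi ` Sigma (up u) GD0" by force
  qed
  then show ?thesis using phi_inj by (simp add: bij_betw_def)
qed


lemma sum_app: "(\<Sum>i\<in>A. f i) x = (\<Sum>i\<in>A. (f i x :: 'b::comm_monoid_add))"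
  by (induction A rule: infinite_finite_induct) auto

lemma down_induct:
  fixes h :: "'x \<Rightarrow> nat"
  assumes f: "finite S"
    and hs: "\<And>x y. x \<in> S \<Longrightarrow> y \<in> S \<Longrightarrow> le x y \<Longrightarrow> x \<noteq> y \<Longrightarrow> h x < h y"
    and step: "\<And>x. x \<in> S \<Longrightarrow> (\<And>y. y \<in> S \<Longrightarrow> le x y \<Longrightarrow> y \<noteq> x \<Longrightarrow> P y) \<Longrightarrow> P x"
  shows "x \<in> S \<Longrightarrow> P x"
proof (induction "Max (h ` S) - h x" arbitrary: x rule: less_induct)
  case less
  show ?case
  proof (rule step[OF less.prems])
    fix y assume y: "y \<in> S" "le x y" "y \<noteq> x"
    have "h x < h y" using hs less.prems y by metis
    moreover have "h y \<le> Max (h ` S)" using f y by simp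
    ultimately have "Max (h ` S) - h y < Max (h ` S) - h x" by simp
    then show "P y" using less.hyps y by blast
  qed
qed

lemma mob_unique:
  fixes g g' :: "'x \<Rightarrow> 'b::ab_group_add" and h :: "'x \<Rightarrow> nat"
  assumes f: "finite S"
    and hs: "\<And>x y. x \<in> S \<Longrightarrow> y \<in> S \<Longrightarrow> le x y \<Longrightarrow> x \<noteq> y \<Longrightarrow> h x < h y"
    and refl: "\<And>x. x \<in> S \<Longrightarrow> le x x"
    and eq: "\<And>x. x \<in> S \<Longrightarrow> (\<Sum>y\<in>{y\<in>S. le x y}. g y) = (\<Sum>y\<in>{y\<in>S. le x y}. g' y)"
  shows "x \<in> S \<Longrightarrow> g x = g' x"
proof (rule down_induct[OF f hs])
  fix x assume x: "x \<in> S" and IH: "\<And>y. y \<in> S \<Longrightarrow> le x y \<Longrightarrow> y \<noteq> x \<Longrightarrow> g y = g' y"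
  define U where "U = {y\<in>S. le x y}"
  have fU: "finite U" using f U_def by simp
  have xU: "x \<in> U" using x refl U_def by simp
  have "(\<Sum>y\<in>U. g y) = g x + (\<Sum>y\<in>U - {x}. g y)" using sum.remove[OF fU xU] .
  moreover have "(\<Sum>y\<in>U. g' y) = g' x + (\<Sum>y\<in>U - {x}. g' y)" using sum.remove[OF fU xU] .
  moreover have "(\<Sum>y\<in>U - {x}. g y) = (\<Sum>y\<in>U - {x}. g' y)"
    by (rule sum.cong) (auto simp: U_def intro: IH)
  moreover have "(\<Sum>y\<in>U. g y) = (\<Sum>y\<in>U. g' y)" using eq x U_def by simp
  ultimately show "g x = g' x" by simp
qed

lemma mob_exists:
  fixes f :: "'x \<Rightarrow> 'b::ab_group_add" and h :: "'x \<Rightarrow> nat"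
  assumes fin: "finite S"
    and hs: "\<And>x y. x \<in> S \<Longrightarrow> y \<in> S \<Longrightarrow> le x y \<Longrightarrow> x \<noteq> y \<Longrightarrow> h x < h y"
    and refl: "\<And>x. x \<in> S \<Longrightarrow> le x x"
  shows "\<exists>g. \<forall>x\<in>S. f x = (\<Sum>y\<in>{y\<in>S. le x y}. g y)"
  using fin hs refl
proof (induction "card S" arbitrary: S)
  case 0
  then show ?case by simp
next
  case (Suc n)
  then have ne: "S \<noteq> {}" by auto
  have "Min (h ` S) \<in> h ` S" using Min_in[of "h ` S"] Suc.prems(1) ne by simp
  then obtain x0 where x0: "x0 \<in> S" "h x0 = Min (h ` S)" by (metis imageE)
  have x0min: "\<And>y. y \<in> S \<Longrightarrow> h x0 \<le> h y" using x0 Suc.prems(1) by simp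
  define S' where "S' = S - {x0}"
  have cS': "n = card S'" using Suc.hyps(2) x0 S'_def Suc.prems(1) by simp
  obtain g' where g': "\<forall>x\<in>S'. f x = (\<Sum>y\<in>{y\<in>S'. le x y}. g' y)"
    using Suc.hyps(1)[OF cS'] Suc.prems S'_def by auto
  define g where "g = g'(x0 := f x0 - (\<Sum>y\<in>{y\<in>S'. le x0 y}. g' y))"
  have "\<forall>x\<in>S. f x = (\<Sum>y\<in>{y\<in>S. le x y}. g y)"
  proof
    fix x assume x: "x \<in> S"
    show "f x = (\<Sum>y\<in>{y\<in>S. le x y}. g y)"
    proof (cases "x = x0")
      case True
      have fU: "finite {y\<in>S. le x0 y}" using Suc.prems(1) by simp
      have "(\<Sum>y\<in>{y\<in>S. le x0 y}. g y) = g x0 + (\<Sum>y\<in>{y\<in>S. le x0 y} - {x0}. g y)"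
      proof (rule sum.remove[OF fU])
        show "x0 \<in> {y\<in>S. le x0 y}" using x0 Suc.prems(3) by simp
      qed
      moreover have "{y\<in>S. le x0 y} - {x0} = {y\<in>S'. le x0 y}" by (auto simp: S'_def)
      moreover have "(\<Sum>y\<in>{y\<in>S'. le x0 y}. g y) = (\<Sum>y\<in>{y\<in>S'. le x0 y}. g' y)"
        by (rule sum.cong) (auto simp: g_def S'_def)
      ultimately show ?thesis using True by (simp add: g_def)
    next
      case False
      have "{y\<in>S. le x y} = {y\<in>S'. le x y}"
      proof (intro equalityI subsetI)
        fix y assume y: "y \<in> {y\<in>S. le x y}"
        have "y \<noteq> x0"
        proof
          assume "y = x0"
          then have "h x < h x0" using Suc.prems(2)[of x x0] y x False by auto
          then show False using x0min[OF x] by simp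
        qed
        then show "y \<in> {y\<in>S'. le x y}" using y S'_def by simp
      qed (auto simp: S'_def)
      moreover have "(\<Sum>y\<in>{y\<in>S'. le x y}. g y) = (\<Sum>y\<in>{y\<in>S'. le x y}. g' y)"
        by (rule sum.cong) (auto simp: g_def S'_def)
      ultimately show ?thesis using g' x False S'_def by simp
    qed
  qed
  then show ?case by blast
qed


definition GG :: "nat \<Rightarrow> nat list set" where
  "GG n = {v. GSP v \<and> length v = n}"

lemma finite_GG: "finite (GG n)"
proof -
  have "GG n \<subseteq> {xs. set xs \<subseteq> {0..n} \<and> length xs = n}"
  proof
    fix v assume v: "v \<in> GG n"
    then have g: "GSP v" "length v = n" by (auto simp: GG_def)
    have "\<forall>x\<in>set v. x \<le> n"
    proof
      fix x assume "x \<in> set v"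
      then have "x \<le> card (set v)" using GSP_mem[OF g(1)] by blast
      also have "\<dots> \<le> length v" by (rule card_length)
      finally show "x \<le> n" using g(2) by simp
    qed
    then show "v \<in> {xs. set xs \<subseteq> {0..n} \<and> length xs = n}" using g by auto
  qed
  moreover have "finite {xs. set xs \<subseteq> {0..n} \<and> length xs = n}"
    by (rule finite_lists_length_eq) simp
  ultimately show ?thesis by (rule finite_subset)
qed

lemma up_GG: "GSP u \<Longrightarrow> up u = {v \<in> GG (length u). pw_le u v}"
  using pw_le_props[of u] by (auto simp: up_def GG_def eqp_def)

lemma finite_up: "GSP u \<Longrightarrow> finite (up u)"
  using up_GG finite_GG by simp

lemma hs_GG: "x \<in> GG n \<Longrightarrow> y \<in> GG n \<Longrightarrow> pw_le x y \<Longrightarrow> x \<noteq> y \<Longrightarrow> card (iInv x) < card (iInv y)"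
  using pw_le_props[of x y] by (auto simp: GG_def)

lemma refl_GG: "x \<in> GG n \<Longrightarrow> pw_le x x" by (simp add: pw_le_refl)

definition PM :: "(nat list \<Rightarrow> 'a::comm_ring_1 elt) \<Rightarrow> bool" where
  "PM M \<longleftrightarrow> (\<forall>u. \<not> GSP u \<longrightarrow> M u = (\<lambda>_. 0)) \<and>
                (\<forall>u. GSP u \<longrightarrow> Fb u = (\<lambda>x. \<Sum>v\<in>{v. GSP v \<and> pw_le u v}. M v x))"

lemma PM_alt: "PM M \<longleftrightarrow> (\<forall>u. \<not> GSP u \<longrightarrow> M u = 0) \<and> (\<forall>u. GSP u \<longrightarrow> Fb u = (\<Sum>v\<in>up u. M v))"
  unfolding PM_def up_def by (simp add: sum_app[symmetric] zero_fun_def)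

lemma PM_ex1: "\<exists>!M. PM (M :: nat list \<Rightarrow> 'a::comm_ring_1 elt)"
proof -
  have "\<forall>n. \<exists>g. \<forall>x\<in>GG n. (Fb x :: 'a elt) = (\<Sum>y\<in>{y\<in>GG n. pw_le x y}. g y)"
  proof
    fix n
    show "\<exists>g. \<forall>x\<in>GG n. (Fb x :: 'a elt) = (\<Sum>y\<in>{y\<in>GG n. pw_le x y}. g y)"
      by (rule mob_exists[where h = "\<lambda>x. card (iInv x)"]) (auto intro: finite_GG hs_GG refl_GG)
  qed
  then obtain Gf where Gf: "\<And>n x. x \<in> GG n \<Longrightarrow> (Fb x :: 'a elt) = (\<Sum>y\<in>{y\<in>GG n. pw_le x y}. Gf n y)"
    by metis
  define M where "M = (\<lambda>u. if GSP u then Gf (length u) u else (0 :: 'a elt))"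
  have "PM M"
    unfolding PM_alt
  proof (intro conjI allI impI)
    fix u :: "nat list" assume "\<not> GSP u" then show "M u = 0" by (simp add: M_def)
  next
    fix u :: "nat list" assume g: "GSP u"
    have "Fb u = (\<Sum>y\<in>{y\<in>GG (length u). pw_le u y}. Gf (length u) y)"
      using Gf g by (simp add: GG_def)
    also have "\<dots> = (\<Sum>v\<in>up u. M v)"
      unfolding up_GG[OF g] by (rule sum.cong) (auto simp: M_def GG_def)
    finally show "Fb u = (\<Sum>v\<in>up u. M v)" .
  qed
  moreover have "\<And>M'. PM M' \<Longrightarrow> M' = M"
  proof
    fix M' :: "nat list \<Rightarrow> 'a elt" and u assume P: "PM M'"
    show "M' u = M u"
    proof (cases "GSP u")
      case False then show ?thesis using P \<open>PM M\<close> by (simp add: PM_alt)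
    next
      case True
      define n where "n = length u"
      have uG: "u \<in> GG n" using True n_def by (simp add: GG_def)
      show ?thesis
      proof (rule mob_unique[where S = "GG n" and le = pw_le and h = "\<lambda>x. card (iInv x)"])
        show "finite (GG n)" by (rule finite_GG)
        fix x assume x: "x \<in> GG n"
        then have gx: "GSP x" and lx: "length x = n" by (auto simp: GG_def)
        have "(\<Sum>y\<in>{y\<in>GG n. pw_le x y}. M' y) = Fb x" using P gx up_GG[OF gx] lx by (simp add: PM_alt)
        also have "\<dots> = (\<Sum>y\<in>{y\<in>GG n. pw_le x y}. M y)" using \<open>PM M\<close> gx up_GG[OF gx] lx by (simp add: PM_alt)
        finally show "(\<Sum>y\<in>{y\<in>GG n. pw_le x y}. M' y) = (\<Sum>y\<in>{y\<in>GG n. pw_le x y}. M y)" .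
      qed (auto intro: hs_GG refl_GG uG)
    qed
  qed
  ultimately show ?thesis by blast
qed

lemma PM_Mb: "PM (Mb :: nat list \<Rightarrow> 'a::comm_ring_1 elt)"
proof -
  have e: "(Mb :: nat list \<Rightarrow> 'a elt) = (THE M. PM M)" unfolding Mb_def PM_def ..
  show ?thesis unfolding e by (rule theI'[OF PM_ex1])
qed

lemma Mb_nonGSP: "\<not> GSP u \<Longrightarrow> (Mb u :: 'a::comm_ring_1 elt) = 0"
  using PM_Mb[where 'a='a] unfolding PM_alt by blast
lemma Mb_F: "GSP u \<Longrightarrow> (Fb u :: 'a::comm_ring_1 elt) = (\<Sum>v\<in>up u. Mb v)"
  using PM_Mb[where 'a='a] unfolding PM_alt by blast


lemma Mb_supp:
  assumes g: "GSP u"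
  shows "(Mb u :: 'a::comm_ring_1 elt) w \<noteq> 0 \<Longrightarrow> w \<in> GG (length u)"
proof -
  define n where "n = length u"
  have uG: "u \<in> GG n" using g n_def by (simp add: GG_def)
  have step: "\<And>x. x \<in> GG n \<Longrightarrow> (\<And>y. y \<in> GG n \<Longrightarrow> pw_le x y \<Longrightarrow> y \<noteq> x \<Longrightarrow> \<forall>w. (Mb y :: 'a elt) w \<noteq> 0 \<longrightarrow> w \<in> GG n)
     \<Longrightarrow> \<forall>w. (Mb x :: 'a elt) w \<noteq> 0 \<longrightarrow> w \<in> GG n"
  proof -
    fix x assume x: "x \<in> GG n"
      and IH: "\<And>y. y \<in> GG n \<Longrightarrow> pw_le x y \<Longrightarrow> y \<noteq> x \<Longrightarrow> \<forall>w. (Mb y :: 'a elt) w \<noteq> 0 \<longrightarrow> w \<in> GG n"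
    have gx: "GSP x" and lx: "length x = n" using x by (auto simp: GG_def)
    have fU: "finite (up x)" using finite_up[OF gx] .
    have xU: "x \<in> up x" using gx by (simp add: up_def pw_le_refl)
    have "(Fb x :: 'a elt) = Mb x + (\<Sum>v\<in>up x - {x}. Mb v)" using Mb_F[where 'a='a, OF gx] sum.remove[OF fU xU, of "Mb :: nat list \<Rightarrow> 'a elt"] by simp
    then have eqx: "\<And>w. (Mb x :: 'a elt) w = Fb x w - (\<Sum>v\<in>up x - {x}. (Mb v :: 'a elt) w)"
      by (simp add: sum_app fun_eq_iff algebra_simps)
    show "\<forall>w. (Mb x :: 'a elt) w \<noteq> 0 \<longrightarrow> w \<in> GG n"
    proof (intro allI impI)
      fix w assume nz: "(Mb x :: 'a elt) w \<noteq> 0"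
      show "w \<in> GG n"
      proof (cases "(Fb x :: 'a elt) w = 0")
        case False
        then have "w = x" by (simp add: Fb_def split: if_splits)
        then show ?thesis using x by simp
      next
        case True
        then have "(\<Sum>v\<in>up x - {x}. (Mb v :: 'a elt) w) \<noteq> 0" using nz eqx by simp
        then obtain y where y: "y \<in> up x - {x}" "(Mb y :: 'a elt) w \<noteq> 0" by (meson sum.neutral)
        have "y \<in> GG n" "pw_le x y" using y up_GG[OF gx] lx by auto
        then show ?thesis using IH y by blast
      qed
    qed
  qed
  have "\<forall>w. (Mb u :: 'a elt) w \<noteq> 0 \<longrightarrow> w \<in> GG n"
    by (rule down_induct[where S = "GG n" and le = pw_le and h = "\<lambda>x. card (iInv x)", OF finite_GG _ step uG])
       (rule hs_GG, assumption+)
  then show "(Mb u :: 'a elt) w \<noteq> 0 \<Longrightarrow> w \<in> GG (length u)" using n_def by blast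
qed

lemma Delta_lin:
  fixes x :: "'a::comm_ring_1 elt"
  assumes f: "finite A" and AG: "\<And>w. w \<in> A \<Longrightarrow> GSP w" and supp: "\<And>w. x w \<noteq> 0 \<Longrightarrow> w \<in> A"
  shows "Delta x = (\<lambda>pq. \<Sum>w\<in>A. x w * DeltaF w pq)"
proof
  fix pq
  have "{u. GSP u \<and> x u \<noteq> 0} \<subseteq> A" using supp by blast
  then have "(\<Sum>u\<in>{u. GSP u \<and> x u \<noteq> 0}. x u * DeltaF u pq) = (\<Sum>w\<in>A. x w * DeltaF w pq)"
    by (rule sum.mono_neutral_left[OF f]) (use AG in auto)
  then show "Delta x pq = (\<Sum>w\<in>A. x w * DeltaF w pq)" by (simp add: Delta_def)
qed

lemma Fb_supp: "(Fb u :: 'a::comm_ring_1 elt) w \<noteq> 0 \<Longrightarrow> w = u"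
  by (simp add: Fb_def split: if_splits)

lemma Delta_Fb: "GSP u \<Longrightarrow> Delta (Fb u :: 'a::comm_ring_1 elt) = DeltaF u"
proof -
  assume g: "GSP u"
  have "Delta (Fb u :: 'a elt) = (\<lambda>pq. \<Sum>w\<in>{u}. Fb u w * DeltaF w pq)"
    by (rule Delta_lin) (use g Fb_supp in auto)
  then show ?thesis by (simp add: Fb_def)
qed

lemma Delta_sum_up:
  assumes g: "GSP u"
  shows "(\<Sum>v\<in>up u. Delta (Mb v :: 'a::comm_ring_1 elt)) = Delta (Fb u :: 'a elt)"
proof
  fix pq
  define n where "n = length u"
  define A where "A = GG n"
  have fA: "finite A" using A_def finite_GG by simp
  have AG: "\<And>w. w \<in> A \<Longrightarrow> GSP w" using A_def by (simp add: GG_def)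
  have upA: "\<And>v. v \<in> up u \<Longrightarrow> GSP v \<and> length v = n" using up_GG[OF g] n_def by (auto simp: GG_def)
  have dv: "\<And>v. v \<in> up u \<Longrightarrow> Delta (Mb v :: 'a elt) = (\<lambda>pq. \<Sum>w\<in>A. Mb v w * DeltaF w pq)"
  proof -
    fix v assume v: "v \<in> up u"
    show "Delta (Mb v :: 'a elt) = (\<lambda>pq. \<Sum>w\<in>A. Mb v w * DeltaF w pq)"
    proof (rule Delta_lin[OF fA AG])
      fix w assume "(Mb v :: 'a elt) w \<noteq> 0"
      then have "w \<in> GG (length v)" using Mb_supp[where 'a='a] upA[OF v] by blast
      then show "w \<in> A" using upA[OF v] A_def by simp
    qed
  qed
  have uA: "u \<in> A" using g A_def n_def by (simp add: GG_def)
  have df: "Delta (Fb u :: 'a elt) = (\<lambda>pq. \<Sum>w\<in>A. Fb u w * DeltaF w pq)"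
  proof (rule Delta_lin[OF fA AG])
    fix w assume "(Fb u :: 'a elt) w \<noteq> 0"
    then have "w = u" by (rule Fb_supp)
    then show "w \<in> A" using uA by simp
  qed
  have "(\<Sum>v\<in>up u. Delta (Mb v :: 'a elt)) pq = (\<Sum>v\<in>up u. \<Sum>w\<in>A. (Mb v :: 'a elt) w * DeltaF w pq)"
    by (simp add: sum_app dv)
  also have "\<dots> = (\<Sum>w\<in>A. \<Sum>v\<in>up u. (Mb v :: 'a elt) w * DeltaF w pq)" by (rule sum.swap)
  also have "\<dots> = (\<Sum>w\<in>A. (\<Sum>v\<in>up u. (Mb v :: 'a elt) w) * DeltaF w pq)" by (simp add: sum_distrib_right)
  also have "\<dots> = (\<Sum>w\<in>A. (Fb u :: 'a elt) w * DeltaF w pq)" by (simp add: Mb_F[where 'a='a, OF g] sum_app)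
  also have "\<dots> = Delta (Fb u :: 'a elt) pq" by (simp add: df)
  finally show "(\<Sum>v\<in>up u. Delta (Mb v :: 'a elt)) pq = Delta (Fb u :: 'a elt) pq" .
qed

definition Dm :: "nat list \<Rightarrow> 'a::comm_ring_1 elt2" where
  "Dm v = (\<Sum>j\<in>GD0 v. tens (Mb (pack (take j v))) (Mb (pack (drop j v))))"

lemma tens_sum: "tens (\<Sum>a\<in>A. f a) (\<Sum>b\<in>B. g b) = (\<Sum>a\<in>A. \<Sum>b\<in>B. tens (f a) (g b) :: 'a::comm_ring_1 elt2)"
proof
  fix pq :: "nat list \<times> nat list"
  obtain p q where pq: "pq = (p, q)" by (cases pq)
  show "tens (\<Sum>a\<in>A. f a) (\<Sum>b\<in>B. g b) pq = (\<Sum>a\<in>A. \<Sum>b\<in>B. tens (f a) (g b) :: 'a elt2) pq"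
    by (simp add: pq tens_def sum_app sum_product)
qed

lemma DeltaF_tens: "(DeltaF u :: 'a::comm_ring_1 elt2) = (\<Sum>i\<in>splits u. tens (Fb (pack (take i u))) (Fb (pack (drop i u))))"
proof
  fix pq :: "nat list \<times> nat list"
  obtain p q where pq: "pq = (p, q)" by (cases pq)
  show "(DeltaF u :: 'a elt2) pq = (\<Sum>i\<in>splits u. tens (Fb (pack (take i u))) (Fb (pack (drop i u)))) pq"
    unfolding pq DeltaF_def tens_def Fb_def sum_app by (simp, rule sum.cong, auto)
qed

lemma finite_GD0: "finite (GD0 v)"
  by (rule finite_subset[of _ "{0..length v}"]) (auto simp: GD0_def)

lemma finite_splits: "finite (splits u)"
  by (rule finite_subset[of _ "{0..length u}"]) (auto simp: splits_def)

lemma tgt_Sigma: "tgt u = Sigma (splits u) (\<lambda>i. up (pack (take i u)) \<times> up (pack (drop i u)))"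
  by (auto simp: tgt_def)

lemma claimA:
  assumes g: "GSP u"
  shows "(\<Sum>v\<in>up u. Dm v) = (Delta (Fb u) :: 'a::comm_ring_1 elt2)"
proof -
  define T :: "nat \<times> nat list \<times> nat list \<Rightarrow> 'a elt2" where
    "T t = tens (Mb (fst (snd t))) (Mb (snd (snd t)))" for t
  have "(\<Sum>v\<in>up u. Dm v) = (\<Sum>v\<in>up u. \<Sum>j\<in>GD0 v. T (phi (v, j)))"
    by (simp add: Dm_def T_def phi_def)
  also have "\<dots> = (\<Sum>vj\<in>Sigma (up u) GD0. T (phi vj))"
    by (subst sum.Sigma) (auto simp: finite_up[OF g] finite_GD0 split_def)
  also have "\<dots> = (\<Sum>t\<in>tgt u. T t)" by (rule sum.reindex_bij_betw[OF phi_bij[OF g]])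
  also have "\<dots> = (\<Sum>i\<in>splits u. \<Sum>ab\<in>up (pack (take i u)) \<times> up (pack (drop i u)). T (i, ab))"
    unfolding tgt_Sigma
  proof (subst sum.Sigma)
    show "finite (splits u)" by (rule finite_splits)
    show "\<forall>i\<in>splits u. finite (up (pack (take i u)) \<times> up (pack (drop i u)))"
      using finite_up GSP_pack stir_take stir_drop GSP_stir[OF g] by auto
  qed (simp add: split_def)
  also have "\<dots> = (\<Sum>i\<in>splits u. \<Sum>a\<in>up (pack (take i u)). \<Sum>b\<in>up (pack (drop i u)). tens (Mb a) (Mb b))"
    by (simp add: T_def sum.cartesian_product split_def)
  also have "\<dots> = (\<Sum>i\<in>splits u. tens (\<Sum>a\<in>up (pack (take i u)). Mb a) (\<Sum>b\<in>up (pack (drop i u)). Mb b))"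
    by (simp add: tens_sum)
  also have "\<dots> = (\<Sum>i\<in>splits u. tens (Fb (pack (take i u))) (Fb (pack (drop i u))))"
  proof (rule sum.cong)
    fix i
    have "GSP (pack (take i u))" "GSP (pack (drop i u))" using GSP_pack stir_take stir_drop GSP_stir[OF g] by auto
    then show "tens (\<Sum>a\<in>up (pack (take i u)). Mb a) (\<Sum>b\<in>up (pack (drop i u)). Mb b) =
      (tens (Fb (pack (take i u))) (Fb (pack (drop i u))) :: 'a elt2)" using Mb_F[where 'a='a] by metis
  qed simp
  also have "\<dots> = DeltaF u" by (simp add: DeltaF_tens)
  also have "\<dots> = Delta (Fb u)" using Delta_Fb[where 'a='a, OF g] by simp
  finally show ?thesis .
qed

lemma claimB:
  assumes g: "GSP u"
  shows "Delta (Mb u :: 'a::comm_ring_1 elt) = Dm u"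
proof -
  define n where "n = length u"
  have uG: "u \<in> GG n" using g n_def by (simp add: GG_def)
  show ?thesis
  proof (rule mob_unique[where S = "GG n" and le = pw_le and h = "\<lambda>x. card (iInv x)"
        and g = "\<lambda>v. Delta (Mb v :: 'a elt)" and g' = Dm])
    show "finite (GG n)" by (rule finite_GG)
    fix x assume x: "x \<in> GG n"
    then have gx: "GSP x" and lx: "length x = n" by (auto simp: GG_def)
    have "{y \<in> GG n. pw_le x y} = up x" using up_GG[OF gx] lx by simp
    then show "(\<Sum>y\<in>{y \<in> GG n. pw_le x y}. Delta (Mb y :: 'a elt)) = (\<Sum>y\<in>{y \<in> GG n. pw_le x y}. Dm y)"
      using Delta_sum_up[where 'a='a, OF gx] claimA[where 'a='a, OF gx] by simp
  qed (auto intro: hs_GG refl_GG uG)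
qed


lemma gd_nth: "gd j u = (\<forall>p q. p < j \<longrightarrow> j \<le> q \<longrightarrow> q < length u \<longrightarrow> u ! q < u ! p)"
proof
  assume h: "gd j u"
  show "\<forall>p q. p < j \<longrightarrow> j \<le> q \<longrightarrow> q < length u \<longrightarrow> u ! q < u ! p"
  proof (intro allI impI)
    fix p q assume pq: "p < j" "j \<le> q" "q < length u"
    then have "p < length u" by simp
    then have "u ! p \<in> set (take j u)" "u ! q \<in> set (drop j u)"
      using in_take_nth[of p j u] in_drop_nth[of j q u] pq by simp_all
    then show "u ! q < u ! p" using h by (simp add: gd_def)
  qed
next
  assume h: "\<forall>p q. p < j \<longrightarrow> j \<le> q \<longrightarrow> q < length u \<longrightarrow> u ! q < u ! p"
  show "gd j u" unfolding gd_def
  proof (intro ballI)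
    fix x y assume x: "x \<in> set (take j u)" and y: "y \<in> set (drop j u)"
    from x obtain p where p: "p < length (take j u)" "take j u ! p = x" by (auto simp: in_set_conv_nth)
    from y obtain q where q: "q < length (drop j u)" "drop j u ! q = y" by (auto simp: in_set_conv_nth)
    have "u ! p = x" "p < j" using p by auto
    moreover have "u ! (j + q) = y" "j + q < length u" using q by auto
    ultimately show "y < x" using h[rule_format, of p "j + q"] by simp
  qed
qed

lemma GD_iff: "j \<in> GD u \<longleftrightarrow> 0 < j \<and> j < length u \<and> gd j u"
proof -
  have "(\<forall>a b. 1 \<le> a \<and> a \<le> j \<and> j < b \<and> b \<le> length u \<longrightarrow> u ! (b - 1) < u ! (a - 1)) =
        (\<forall>p q. p < j \<longrightarrow> j \<le> q \<longrightarrow> q < length u \<longrightarrow> u ! q < u ! p)"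
  proof (intro iffI allI impI)
    fix p q assume h: "\<forall>a b. 1 \<le> a \<and> a \<le> j \<and> j < b \<and> b \<le> length u \<longrightarrow> u ! (b - 1) < u ! (a - 1)"
      and pq: "p < j" "j \<le> q" "q < length u"
    show "u ! q < u ! p" using h[rule_format, of "p+1" "q+1"] pq by simp
  next
    fix a b assume h: "\<forall>p q. p < j \<longrightarrow> j \<le> q \<longrightarrow> q < length u \<longrightarrow> u ! q < u ! p"
      and ab: "1 \<le> a \<and> a \<le> j \<and> j < b \<and> b \<le> length u"
    have "a - 1 < j" "j \<le> b - 1" "b - 1 < length u" using ab by auto
    then show "u ! (b - 1) < u ! (a - 1)" using h by blast
  qed
  then show ?thesis unfolding GD_def gd_nth by auto
qed

lemma GD0_decomp:
  assumes "0 < length u"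
  shows "GD0 u = insert 0 (insert (length u) (GD u))"
proof (intro equalityI subsetI)
  fix j assume j: "j \<in> GD0 u"
  then have "j \<le> length u" "gd j u" by (auto simp: GD0_def)
  then show "j \<in> insert 0 (insert (length u) (GD u))" using GD_iff[of j u] by auto
next
  fix j assume j: "j \<in> insert 0 (insert (length u) (GD u))"
  have "gd 0 u" "gd (length u) u" by (simp_all add: gd_def)
  then show "j \<in> GD0 u" using j GD_iff[of j u] by (auto simp: GD0_def)
qed

lemma up_Nil: "up [] = {[]}"
proof (intro equalityI subsetI)
  fix v assume "v \<in> up []"
  then have "v \<in> GG 0" using up_GG[OF GSP_Nil] by simp
  then have "length v = 0" by (simp add: GG_def)
  then show "v \<in> {[]}" by simp
next
  fix v assume "v \<in> {([]::nat list)}"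
  then show "v \<in> up []" using GSP_Nil pw_le_refl by (simp add: up_def)
qed

lemma Mb_Nil: "(Mb [] :: 'a::comm_ring_1 elt) = Fb []"
  using Mb_F[where 'a='a, OF GSP_Nil] up_Nil by simp

lemma finite_GD: "finite (GD u)"
  by (rule finite_subset[of _ "{0..length u}"]) (auto simp: GD_def)

theorem mainTheorem17:
  fixes u :: "nat list"
  assumes "GSP u" and "0 < length u"
  shows "(Delta_plus (Mb u) :: 'a::comm_ring_1 elt2) =
         (\<lambda>pq. \<Sum>i\<in>GD u. tens (Mb (pack (take i u))) (Mb (pack (drop i u))) pq)"
proof -
  define n where "n = length u"
  have n0: "0 < n" using assms(2) n_def by simp
  have nGD: "n \<notin> GD u" "0 \<notin> GD u" using GD_iff n_def by auto
  have pu: "pack u = u" using GSP_pack_id[OF assms(1)] .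
  define S :: "'a elt2" where "S = (\<Sum>i\<in>GD u. tens (Mb (pack (take i u))) (Mb (pack (drop i u))))"
  define F :: "nat \<Rightarrow> 'a elt2" where "F j = tens (Mb (pack (take j u))) (Mb (pack (drop j u)))" for j
  have fin: "finite (insert n (GD u))" using finite_GD by simp
  have nin: "0 \<notin> insert n (GD u)" using nGD n0 by simp
  have "(Dm u :: 'a elt2) = sum F (insert 0 (insert n (GD u)))"
    unfolding Dm_def GD0_decomp[OF assms(2)] F_def n_def ..
  also have "\<dots> = F 0 + sum F (insert n (GD u))" using sum.insert[OF fin nin] .
  also have "sum F (insert n (GD u)) = F n + sum F (GD u)" using sum.insert[OF finite_GD nGD(1)] .
  also have "F 0 = tens (Mb []) (Mb u)" using pu by (simp add: F_def)
  also have "F n = tens (Mb u) (Mb [])" using pu n_def by (simp add: F_def)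
  also have "sum F (GD u) = S" by (simp add: S_def F_def)
  finally have "(Dm u :: 'a elt2) = tens (Mb []) (Mb u) + (tens (Mb u) (Mb []) + S)" .
  then have D: "Delta (Mb u :: 'a elt) = tens (Fb []) (Mb u) + (tens (Mb u) (Fb []) + S)"
    using claimB[where 'a='a, OF assms(1)] Mb_Nil[where 'a='a] by simp
  show ?thesis
  proof
    fix pq
    show "(Delta_plus (Mb u) :: 'a elt2) pq =
         (\<Sum>i\<in>GD u. tens (Mb (pack (take i u))) (Mb (pack (drop i u))) pq)"
      unfolding Delta_plus_def D using S_def by (simp add: sum_app)
  qed
qed


end
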